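(* Let $M\cong\prec a_1,\ldots,a_m\succ$ be an integral lattice relative to a good BONG, $R_i=\operatorname{ord}(a_i)$. (i) $R_j\ge R_i\ge 0$ for all $i,j\in[1,m]^O$ with $j\ge i$, and $R_j\ge R_i\ge -2e$ for all $i,j\in[1,m]^E$ with $j\ge i$. (ii) If $R_j=0$ for some $j\in[1,m]^O$, then $R_i=0$ for all $i\in[1,j]^O$ and $R_i$ is even for all $1\le i\le j$. (iii) If $R_j=-2e$ for some $j\in[1,m]^E$, then for each $i\in[1,j]^E$ we have $R_{i-1}=0$, $R_i=-2e$ and $d(-a_{i-1}a_i)\ge d[-a_{i-1}a_i]\ge 2e$; consequently $d[(-1)^{j/2}a_{1,j}]\ge 2e$. (iv) If $R_j=-2e$ for some $j\in[1,m]^E$, then $[a_1,\ldots,a_j]\cong\mathbb H^{j/2}$ or $\mathbb H^{(j-2)/2}\perp[1,-\Delta]$. (v) If $R_j=-2e$ and $R_{j+1}$ is even for some $j\in[1,m]^E$ (with $j+1\le m$), then $[a_1,\ldots,a_{j+1}]\cong\mathbb H^{j/2}\perp[\varepsilon]$ for some $\varepsilon\in\mathcal O_F^\times$ with $\varepsilon\in a_{j+1}F^{\times2}\cup\Delta a_{j+1}F^{\times2}$.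
   Context: $F$ dyadic local field, $\mathcal O_F$, $\mathcal O_F^\times$, uniformizer $\pi$, valuation $\operatorname{ord}$, $e=\operatorname{ord}(2)$. $\mathfrak d(c)=\bigcap_{x\in F}(c-x^2)\mathcal O_F$, $d(c)=\operatorname{ord}(c^{-1}\mathfrak d(c))$ for $c\in F^\times$. $\Delta=1-4\rho$ with $\rho\in\mathcal O_F^\times$, $\mathfrak d(\Delta)=4\mathcal O_F$. $[a_1,\ldots,a_k]$ is the space with orthogonal basis of lengths $a_i$; $\mathbb H$ the hyperbolic plane. $[h,k]^E$ (resp. $[h,k]^O$) is the set of even (resp. odd) integers in $[h,k]$. A lattice is integral if $Q(M)\subseteq\mathcal O_F$. BONGs: $x_1,\ldots,x_m\in FM$ is a BONG of $M$ if $x_1\in M$ with $Q(x_1)\mathcal O_F=\mathfrak nM$ and $x_2,\ldots,x_m$ is a BONG of the projection of $M$ onto $(Fx_1)^\perp$; good if $\operatorname{ord}Q(x_i)\le\operatorname{ord}Q(x_{i+2})$. $M\cong\prec a_1,\ldots,a_m\succ$ means $Q(x_i)=a_i$. Write $a_{i,j}=a_i\cdots a_j$, $a_{i,i-1}=1$. For $1\le i\le m-1$, $\alpha_i=\min\{T_0,\ldots,T_{m-1}\}$ where $T_0=(R_{i+1}-R_i)/2+e$, $T_j=R_{i+1}-R_j+d(-a_ja_{j+1})$ for $1\le j\le i$, $T_j=R_{j+1}-R_i+d(-a_ja_{j+1})$ for $i\le j\le m-1$. For $c\in F^\times$ and $0\le i-1\le j\le m$, $d[ca_{i,j}]=\min\{d(ca_{i,j}),\alpha_{i-1},\alpha_j\}$,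 where $\alpha_0$ and $\alpha_m$ are omitted. *)

theory Defs
  imports Complex_Main "HOL-Library.Extended_Real"
begin

text \<open>A field F (a type) together with its normalized discrete valuation ord
(value at 0 is irrelevant, ord 0 plays the role of infinity and is never used).\<close>

definition val_ring :: "('a::field \<Rightarrow> int) \<Rightarrow> 'a set" where
  "val_ring ord = {x. x = 0 \<or> 0 \<le> ord x}"

definition val_units :: "('a::field \<Rightarrow> int) \<Rightarrow> 'a set" where
  "val_units ord = {x. x \<noteq> 0 \<and> ord x = 0}"

definition dyadic_local_field :: "('a::field \<Rightarrow> int) \<Rightarrow> bool" where
  "dyadic_local_field ord \<longleftrightarrow>
     (\<forall>x y. x \<noteq> 0 \<longrightarrow> y \<noteq> 0 \<longrightarrow> ord (x * y) = ord x + ord y) \<and>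
     (\<forall>x y. x \<noteq> 0 \<longrightarrow> y \<noteq> 0 \<longrightarrow> x + y \<noteq> 0 \<longrightarrow> min (ord x) (ord y) \<le> ord (x + y)) \<and>
     (\<exists>\<pi>. \<pi> \<noteq> 0 \<and> ord \<pi> = 1) \<and>
     (\<forall>X :: nat \<Rightarrow> 'a.
        (\<forall>k. \<exists>N. \<forall>n\<ge>N. \<forall>n'\<ge>N. X n = X n' \<or> k \<le> ord (X n - X n')) \<longrightarrow>
        (\<exists>L. \<forall>k. \<exists>N. \<forall>n\<ge>N. X n = L \<or> k \<le> ord (X n - L))) \<and>
     (\<exists>S. finite S \<and> S \<subseteq> val_ring ord \<and>
        (\<forall>x\<in>val_ring ord. \<exists>s\<in>S. x = s \<or> 1 \<le> ord (x - s))) \<and>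
     (2::'a) \<noteq> 0 \<and> 1 \<le> ord 2"

definition principal :: "('a::field \<Rightarrow> int) \<Rightarrow> 'a \<Rightarrow> 'a set" where
  "principal ord c = {c * y | y. y \<in> val_ring ord}"

text \<open>ord of a fractional ideal (infinity for the zero ideal)\<close>
definition ideal_ord :: "('a::field \<Rightarrow> int) \<Rightarrow> 'a set \<Rightarrow> ereal" where
  "ideal_ord ord I = Inf ((\<lambda>y. ereal (of_int (ord y))) ` (I - {0}))"

definition dfrak :: "('a::field \<Rightarrow> int) \<Rightarrow> 'a \<Rightarrow> 'a set" where
  "dfrak ord c = (\<Inter>x. principal ord (c - x\<^sup>2))"

definition dd :: "('a::field \<Rightarrow> int) \<Rightarrow> 'a \<Rightarrow> ereal" where
  "dd ord c = ideal_ord ord ((\<lambda>y. inverse c * y) ` dfrak ord c)"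

section \<open>Invariants alpha_i and d[ . ] of a sequence a_1, ..., a_m (1-indexed)\<close>

definition alpha :: "('a::field \<Rightarrow> int) \<Rightarrow> (nat \<Rightarrow> 'a) \<Rightarrow> nat \<Rightarrow> nat \<Rightarrow> ereal" where
  "alpha ord a m i = Inf
     ({ereal (of_int (ord (a (i+1)) - ord (a i)) / 2 + of_int (ord 2))}
      \<union> {ereal (of_int (ord (a (i+1)) - ord (a j))) + dd ord (- (a j * a (j+1))) | j. 1 \<le> j \<and> j \<le> i}
      \<union> {ereal (of_int (ord (a (j+1)) - ord (a i))) + dd ord (- (a j * a (j+1))) | j. i \<le> j \<and> j + 1 \<le> m})"

definition aprod :: "(nat \<Rightarrow> 'a::field) \<Rightarrow> nat \<Rightarrow> nat \<Rightarrow> 'a" where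
  "aprod a i j = (\<Prod>k\<in>{i..j}. a k)"

definition dbr :: "('a::field \<Rightarrow> int) \<Rightarrow> (nat \<Rightarrow> 'a) \<Rightarrow> nat \<Rightarrow> 'a \<Rightarrow> nat \<Rightarrow> nat \<Rightarrow> ereal" where
  "dbr ord a m c i j = min (dd ord (c * aprod a i j))
      (min (if 2 \<le> i then alpha ord a m (i - 1) else \<infinity>)
           (if j < m then alpha ord a m j else \<infinity>))"

text \<open>V is a vector space over F via scale; B is the symmetric bilinear form, Q(x) = B x x.\<close>

definition sym_bilinear :: "('a::field \<Rightarrow> 'v::ab_group_add \<Rightarrow> 'v) \<Rightarrow> ('v \<Rightarrow> 'v \<Rightarrow> 'a) \<Rightarrow> bool" where
  "sym_bilinear scale B \<longleftrightarrow> (\<forall>u v. B u v = B v u) \<and>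
     (\<forall>u v w. B (u + v) w = B u w + B v w) \<and> (\<forall>c u w. B (scale c u) w = c * B u w)"

definition nondegenerate_on :: "('v::zero \<Rightarrow> 'v \<Rightarrow> 'a::field) \<Rightarrow> 'v set \<Rightarrow> bool" where
  "nondegenerate_on B V \<longleftrightarrow> (\<forall>v\<in>V. (\<forall>w\<in>V. B v w = 0) \<longrightarrow> v = 0)"

definition Ospan :: "('a::field \<Rightarrow> int) \<Rightarrow> ('a \<Rightarrow> 'v::ab_group_add \<Rightarrow> 'v) \<Rightarrow> 'v set \<Rightarrow> 'v set" where
  "Ospan ord scale G = {\<Sum>k<n. scale (c k) (v k) | (n::nat) c v. \<forall>k<n. c k \<in> val_ring ord \<and> v k \<in> G}"

text \<open>a lattice: a finitely generated O_F-submodule (it is a lattice on its span FM)\<close>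
definition is_lattice :: "('a::field \<Rightarrow> int) \<Rightarrow> ('a \<Rightarrow> 'v::ab_group_add \<Rightarrow> 'v) \<Rightarrow> 'v set \<Rightarrow> bool" where
  "is_lattice ord scale M \<longleftrightarrow> (\<exists>G. finite G \<and> M = Ospan ord scale G)"

definition norm_ideal :: "('a::field \<Rightarrow> int) \<Rightarrow> ('v \<Rightarrow> 'v \<Rightarrow> 'a) \<Rightarrow> 'v set \<Rightarrow> 'a set" where
  "norm_ideal ord B M = {\<Sum>k<n. c k * B (v k) (v k) | (n::nat) c v. \<forall>k<n. c k \<in> val_ring ord \<and> v k \<in> M}"

definition proj :: "('a::field \<Rightarrow> 'v::ab_group_add \<Rightarrow> 'v) \<Rightarrow> ('v \<Rightarrow> 'v \<Rightarrow> 'a) \<Rightarrow> 'v \<Rightarrow> 'v \<Rightarrow> 'v" where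
  "proj scale B x v = v - scale (B v x / B x x) x"

fun is_BONG :: "('a::field \<Rightarrow> int) \<Rightarrow> ('a \<Rightarrow> 'v::ab_group_add \<Rightarrow> 'v) \<Rightarrow> ('v \<Rightarrow> 'v \<Rightarrow> 'a)
                 \<Rightarrow> 'v list \<Rightarrow> 'v set \<Rightarrow> bool" where
  "is_BONG ord scale B [] M \<longleftrightarrow> M = {0}"
| "is_BONG ord scale B (x # xs) M \<longleftrightarrow>
     x \<in> M \<and> B x x \<noteq> 0 \<and> principal ord (B x x) = norm_ideal ord B M \<and>
     is_BONG ord scale B xs (proj scale B x ` M)"

definition good_BONG :: "('a::field \<Rightarrow> int) \<Rightarrow> ('v \<Rightarrow> 'v \<Rightarrow> 'a) \<Rightarrow> 'v list \<Rightarrow> bool" where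
  "good_BONG ord B xs \<longleftrightarrow>
     (\<forall>i. i + 2 < length xs \<longrightarrow> ord (B (xs!i) (xs!i)) \<le> ord (B (xs!(i+2)) (xs!(i+2))))"

section \<open>Quadratic spaces in coordinates (Gram matrices, indices 0..n-1) and isometry\<close>

definition gram_iso :: "nat \<Rightarrow> (nat \<Rightarrow> nat \<Rightarrow> 'a::field) \<Rightarrow> (nat \<Rightarrow> nat \<Rightarrow> 'a) \<Rightarrow> bool" where
  "gram_iso n G H \<longleftrightarrow> (\<exists>P Pinv.
     (\<forall>k<n. \<forall>l<n. (\<Sum>i<n. P k i * Pinv i l) = (if k = l then 1 else 0)) \<and>
     (\<forall>k<n. \<forall>l<n. (\<Sum>i<n. Pinv k i * P i l) = (if k = l then 1 else 0)) \<and>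
     (\<forall>k<n. \<forall>l<n. (\<Sum>i<n. \<Sum>j<n. P i k * G i j * P j l) = H k l))"

definition diagm :: "(nat \<Rightarrow> 'a::field) \<Rightarrow> nat \<Rightarrow> nat \<Rightarrow> 'a" where
  "diagm d i j = (if i = j then d i else 0)"

text \<open>Gram matrix of H^k (hyperbolic planes with Gram matrix [[0,1],[1,0]])\<close>
definition hyp_gram :: "nat \<Rightarrow> nat \<Rightarrow> nat \<Rightarrow> 'a::field" where
  "hyp_gram k i j = (if i < 2*k \<and> j < 2*k \<and> i \<noteq> j \<and> i div 2 = j div 2 then 1 else 0)"

definition osum :: "nat \<Rightarrow> (nat \<Rightarrow> nat \<Rightarrow> 'a::field) \<Rightarrow> (nat \<Rightarrow> nat \<Rightarrow> 'a) \<Rightarrow> nat \<Rightarrow> nat \<Rightarrow> 'a" where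
  "osum n G H i j = (if i < n \<and> j < n then G i j
                     else if n \<le> i \<and> n \<le> j then H (i - n) (j - n) else 0)"

end

theory Submission
  imports Defs
begin


definition vge :: "('a::field \<Rightarrow> int) \<Rightarrow> 'a \<Rightarrow> int \<Rightarrow> bool" where
  "vge ord x k \<longleftrightarrow> x = 0 \<or> k \<le> ord x"

locale dlf =
  fixes ord :: "'a::field \<Rightarrow> int"
  assumes F: "dyadic_local_field ord"
begin

lemma ord_mult: "x \<noteq> 0 \<Longrightarrow> y \<noteq> 0 \<Longrightarrow> ord (x * y) = ord x + ord y"
  using F unfolding dyadic_local_field_def by blast

lemma ultra: "x \<noteq> 0 \<Longrightarrow> y \<noteq> 0 \<Longrightarrow> x + y \<noteq> 0 \<Longrightarrow> min (ord x) (ord y) \<le> ord (x + y)"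
  using F unfolding dyadic_local_field_def by blast

lemma two_nz: "(2::'a) \<noteq> 0" using F unfolding dyadic_local_field_def by blast
lemma e_pos: "1 \<le> ord 2" using F unfolding dyadic_local_field_def by blast

lemma ord_one[simp]: "ord 1 = 0"
  using ord_mult[of 1 1] by simp

lemma ord_inverse: "x \<noteq> 0 \<Longrightarrow> ord (inverse x) = - ord x"
  using ord_mult[of x "inverse x"] by simp

lemma ord_divide: "x \<noteq> 0 \<Longrightarrow> y \<noteq> 0 \<Longrightarrow> ord (x / y) = ord x - ord y"
  by (simp add: divide_inverse ord_mult ord_inverse)

lemma ord_m1[simp]: "ord (-1) = 0"
  using ord_mult[of "-1" "-1"] by simp

lemma ord_uminus[simp]: "ord (- x) = ord x"
proof (cases "x = 0")
  case True then show ?thesis by simp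
next
  case False then show ?thesis using ord_mult[of "-1" x] by simp
qed

lemma ord_power: "x \<noteq> 0 \<Longrightarrow> ord (x ^ n) = int n * ord x"
proof (induction n)
  case 0 then show ?case by simp
next
  case (Suc n) then show ?case by (simp add: ord_mult distrib_right)
qed


lemma ord_sq: "x \<noteq> 0 \<Longrightarrow> ord (x\<^sup>2) = 2 * ord x"
  using ord_power[of x 2] by simp

lemma ord_4: "ord (4::'a) = 2 * ord 2"
proof -
  have "(4::'a) = 2 * 2" by simp
  moreover have "ord ((2::'a) * 2) = ord 2 + ord 2" using ord_mult two_nz by blast
  ultimately show ?thesis by simp
qed


lemma four_nz: "(4::'a) \<noteq> 0"
proof -
  have h: "(4::'a) = 2 * 2" by simp
  have "(2::'a) * 2 \<noteq> 0" using two_nz by (simp only: mult_eq_0_iff) simp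
  then show ?thesis using h by metis
qed


lemma vge_0[simp]: "vge ord 0 k" by (simp add: vge_def)

lemma vge_nz: "x \<noteq> 0 \<Longrightarrow> vge ord x k \<longleftrightarrow> k \<le> ord x" by (simp add: vge_def)

lemma vge_mono: "vge ord x k \<Longrightarrow> l \<le> k \<Longrightarrow> vge ord x l" by (auto simp: vge_def)

lemma vge_uminus[simp]: "vge ord (- x) k \<longleftrightarrow> vge ord x k" by (simp add: vge_def)

lemma vge_add: "vge ord x k \<Longrightarrow> vge ord y k \<Longrightarrow> vge ord (x + y) k"
proof -
  assume a: "vge ord x k" "vge ord y k"
  show ?thesis
  proof (cases "x = 0 \<or> y = 0 \<or> x + y = 0")
    case True then show ?thesis using a by auto
  next
    case False
    then have "min (ord x) (ord y) \<le> ord (x + y)" using ultra by blast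
    then show ?thesis using a False by (simp add: vge_def)
  qed
qed


lemma vge_diff: "vge ord x k \<Longrightarrow> vge ord y k \<Longrightarrow> vge ord (x - y) k"
  using vge_add[of x k "-y"] by simp

lemma vge_mult: "vge ord x k \<Longrightarrow> vge ord y l \<Longrightarrow> vge ord (x * y) (k + l)"
  by (cases "x = 0"; cases "y = 0") (auto simp: vge_def ord_mult)

lemma vge_mult': "vge ord x k \<Longrightarrow> vge ord y l \<Longrightarrow> m \<le> k + l \<Longrightarrow> vge ord (x * y) m"
  using vge_mult vge_mono by blast

lemma vge_one: "vge ord 1 k \<longleftrightarrow> k \<le> 0" by (simp add: vge_def)

lemma vge_ord: "vge ord x (ord x)" by (simp add: vge_def)

lemma vge_divide_iff: "y \<noteq> 0 \<Longrightarrow> vge ord (x / y) k \<longleftrightarrow> vge ord x (k + ord y)"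
  by (cases "x = 0") (auto simp: vge_def ord_divide)

lemma vge_mult_iff: "y \<noteq> 0 \<Longrightarrow> vge ord (x * y) k \<longleftrightarrow> vge ord x (k - ord y)"
  by (cases "x = 0") (auto simp: vge_def ord_mult)

lemma vge_sq_iff: "vge ord (x\<^sup>2) (2*k) \<longleftrightarrow> vge ord x k"
  by (cases "x = 0") (auto simp: vge_def ord_sq)

lemma vge_all_zero: "(\<And>k. vge ord x k) \<Longrightarrow> x = 0"
proof (rule ccontr)
  assume h: "\<And>k. vge ord x k" and "x \<noteq> 0"
  then have "ord x + 1 \<le> ord x" using h[of "ord x + 1"] by (simp add: vge_def)
  then show False by simp
qed

lemma ord_add_strict: "x \<noteq> 0 \<Longrightarrow> vge ord y (ord x + 1) \<Longrightarrow> x + y \<noteq> 0 \<and> ord (x + y) = ord x"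
proof -
  assume x: "x \<noteq> 0" and y: "vge ord y (ord x + 1)"
  show ?thesis
  proof (cases "y = 0")
    case True then show ?thesis using x by simp
  next
    case False
    then have oy: "ord y > ord x" using y by (simp add: vge_def)
    have nz: "x + y \<noteq> 0"
    proof
      assume h: "x + y = 0"
      have "y = (x + y) - x" by simp
      then have "y = - x" using h by simp
      then show False using oy by simp
    qed
    have "min (ord x) (ord y) \<le> ord (x + y)" using ultra[OF x False nz] .
    moreover have "min (ord (x + y)) (ord (-y)) \<le> ord x"
      using ultra[of "x+y" "-y"] nz False x by simp
    ultimately show ?thesis using nz oy by auto
  qed
qed

lemma unit_plus: "vge ord s 1 \<Longrightarrow> 1 + s \<noteq> 0 \<and> ord (1 + s) = 0"
  using ord_add_strict[of 1 s] by simp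

lemma unit_minus: "vge ord s 1 \<Longrightarrow> 1 - s \<noteq> 0 \<and> ord (1 - s) = 0"
  using unit_plus[of "-s"] by simp

lemma val_ring_iff: "x \<in> val_ring ord \<longleftrightarrow> vge ord x 0"
  by (simp add: val_ring_def vge_def)

lemma val_units_iff: "x \<in> val_units ord \<longleftrightarrow> x \<noteq> 0 \<and> ord x = 0"
  by (simp add: val_units_def)

lemma principal_iff: "c \<noteq> 0 \<Longrightarrow> z \<in> principal ord c \<longleftrightarrow> vge ord (z / c) 0"
proof
  assume c: "c \<noteq> 0" and "z \<in> principal ord c"
  then obtain y where "z = c * y" "vge ord y 0" unfolding principal_def val_ring_iff by blast
  then show "vge ord (z / c) 0" using c by simp
next
  assume c: "c \<noteq> 0" and "vge ord (z / c) 0"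
  moreover have "z = c * (z / c)" using c by simp
  ultimately show "z \<in> principal ord c" unfolding principal_def val_ring_iff by blast
qed

end


context dlf begin

lemma dd_lower:
  assumes c: "c \<noteq> 0" and h: "vge ord ((c - b\<^sup>2) / c) k"
  shows "ereal (of_int k) \<le> dd ord c"
  unfolding dd_def ideal_ord_def
proof (rule Inf_greatest)
  fix z assume "z \<in> (\<lambda>y. ereal (of_int (ord y))) ` ((\<lambda>y. inverse c * y) ` dfrak ord c - {0})"
  then obtain u where u: "u \<in> dfrak ord c" "inverse c * u \<noteq> 0" and z: "z = ereal (of_int (ord (inverse c * u)))"
    by blast
  have "u \<in> principal ord (c - b\<^sup>2)" using u(1) unfolding dfrak_def by blast
  show "ereal (of_int k) \<le> z"
  proof (cases "c - b\<^sup>2 = 0")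
    case True
    then have "u = 0" using \<open>u \<in> principal ord (c - b\<^sup>2)\<close> unfolding principal_def by simp
    then show ?thesis using u(2) by simp
  next
    case False
    then have "vge ord (u / (c - b\<^sup>2)) 0" using \<open>u \<in> principal ord (c - b\<^sup>2)\<close> principal_iff by blast
    then have "vge ord (u / (c - b\<^sup>2) * ((c - b\<^sup>2) / c)) (0 + k)" using vge_mult h by blast
    moreover have "u / (c - b\<^sup>2) * ((c - b\<^sup>2) / c) = inverse c * u" using False c
      by (simp add: field_simps)
    ultimately have "vge ord (inverse c * u) k" by simp
    then have "k \<le> ord (inverse c * u)" using u(2) by (simp add: vge_def)
    then show ?thesis using z by simp
  qed
qed

lemma dd_nonneg: "c \<noteq> 0 \<Longrightarrow> 0 \<le> dd ord c"
  using dd_lower[of c 0 0] by (simp add: vge_one zero_ereal_def)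

lemma vge_two: "vge ord 2 1" using e_pos by (simp add: vge_def)
lemma vge_two_e: "vge ord 2 (ord 2)" by (simp add: vge_def)

lemma compl_ax: "\<forall>X :: nat \<Rightarrow> 'a.
        (\<forall>k. \<exists>N. \<forall>n\<ge>N. \<forall>n'\<ge>N. X n = X n' \<or> k \<le> ord (X n - X n')) \<longrightarrow>
        (\<exists>L. \<forall>k. \<exists>N. \<forall>n\<ge>N. X n = L \<or> k \<le> ord (X n - L))"
  apply (insert F[unfolded dyadic_local_field_def])
  apply (elim conjE)
  apply assumption
  done

lemma complete:
  fixes X :: "nat \<Rightarrow> 'a"
  assumes "\<And>k. \<exists>N. \<forall>n\<ge>N. \<forall>n'\<ge>N. vge ord (X n - X n') k"
  shows "\<exists>L. \<forall>k. \<exists>N. \<forall>n\<ge>N. vge ord (X n - L) k"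
proof -
  have "X n = X n' \<or> k \<le> ord (X n - X n')" if "vge ord (X n - X n') k" for n n' k
    using that unfolding vge_def by auto
  then have "\<forall>k. \<exists>N. \<forall>n\<ge>N. \<forall>n'\<ge>N. X n = X n' \<or> k \<le> ord (X n - X n')"
    using assms by meson
  from compl_ax[THEN spec, of X, THEN mp, OF this] obtain L where
     L: "\<forall>k. \<exists>N. \<forall>n\<ge>N. X n = L \<or> k \<le> ord (X n - L)" by blast
  have "vge ord (X n - L) k" if "X n = L \<or> k \<le> ord (X n - L)" for n k
    using that unfolding vge_def by auto
  then show ?thesis using L by meson
qed

definition newton :: "'a \<Rightarrow> 'a \<Rightarrow> 'a" where
  "newton w x = x - (x\<^sup>2 + x - w) / (2 * x + 1)"

lemma newton_step:
  assumes x: "vge ord x 0" and f: "vge ord (x\<^sup>2 + x - w) k" and k: "1 \<le> k"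
  shows "vge ord (newton w x) 0 \<and> vge ord ((newton w x)\<^sup>2 + newton w x - w) (2 * k)
         \<and> vge ord (newton w x - x) k"
proof -
  have "vge ord (2 * x) (1 + 0)" using vge_mult[OF vge_two x] .
  then have u: "1 + 2 * x \<noteq> 0" "ord (1 + 2 * x) = 0" using unit_plus by auto
  define \<delta> where "\<delta> = (x\<^sup>2 + x - w) / (2 * x + 1)"
  have d: "vge ord \<delta> k" using f u unfolding \<delta>_def by (simp add: vge_divide_iff add.commute)
  have nw: "newton w x = x - \<delta>" unfolding newton_def \<delta>_def ..
  have fd: "\<delta> * (2 * x + 1) = x\<^sup>2 + x - w" using u unfolding \<delta>_def by (simp add: add.commute)
  have "(x - \<delta>)\<^sup>2 + (x - \<delta>) - w = (x\<^sup>2 + x - w) - \<delta> * (2 * x + 1) + \<delta>\<^sup>2"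
    by (simp add: power2_eq_square algebra_simps)
  also have "\<dots> = \<delta>\<^sup>2" using fd by simp
  finally have e: "(x - \<delta>)\<^sup>2 + (x - \<delta>) - w = \<delta>\<^sup>2" .
  have "vge ord (\<delta>\<^sup>2) (2 * k)" using d vge_sq_iff by blast
  moreover have "vge ord (x - \<delta>) 0" using vge_diff[OF x vge_mono[OF d]] k by simp
  ultimately show ?thesis using nw e d by simp
qed

lemma hensel:
  assumes w: "vge ord w 0" and x0: "vge ord x0 0" and f0: "vge ord (x0\<^sup>2 + x0 - w) 1"
  shows "\<exists>x. vge ord x 0 \<and> x\<^sup>2 + x = w"
proof -
  define X where "X n = (newton w ^^ n) x0" for n
  have XS: "X (Suc n) = newton w (X n)" for n unfolding X_def by simp
  have inv: "vge ord (X n) 0 \<and> vge ord ((X n)\<^sup>2 + X n - w) (int n + 1)" for n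
  proof (induction n)
    case 0 then show ?case using x0 f0 by (simp add: X_def)
  next
    case (Suc n)
    then have "vge ord (X (Suc n)) 0 \<and> vge ord ((X (Suc n))\<^sup>2 + X (Suc n) - w) (2 * (int n + 1))"
      using newton_step[of "X n" w "int n + 1"] XS by simp
    then show ?case using vge_mono by fastforce
  qed
  have stepd: "vge ord (X (Suc n) - X n) (int n + 1)" for n
    using newton_step[of "X n" w "int n + 1"] inv[of n] XS by simp
  have cauchy: "vge ord (X (n + d) - X n) (int n + 1)" for n d
  proof (induction d)
    case 0 then show ?case by simp
  next
    case (Suc d)
    have "vge ord (X (Suc (n + d)) - X (n + d)) (int n + 1)"
      using stepd[of "n + d"] vge_mono by fastforce
    then have "vge ord ((X (Suc (n + d)) - X (n + d)) + (X (n + d) - X n)) (int n + 1)"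
      using Suc vge_add by blast
    then show ?case by simp
  qed
  have cauchy2: "vge ord (X n - X n') k" if "n \<ge> nat k" "n' \<ge> nat k" for n n' k
  proof (cases "n \<le> n'")
    case True
    then obtain d where "n' = n + d" using le_Suc_ex by blast
    then have "vge ord (X n' - X n) (int n + 1)" using cauchy by simp
    then have "vge ord (X n' - X n) k" using that vge_mono by fastforce
    then show ?thesis using vge_uminus[of "X n' - X n" k] by simp
  next
    case False
    then obtain d where "n = n' + d" using le_Suc_ex[of n' n] by auto
    then have "vge ord (X n - X n') (int n' + 1)" using cauchy by simp
    then show ?thesis using that vge_mono by fastforce
  qed
  obtain L where L: "\<And>k. \<exists>N. \<forall>n\<ge>N. vge ord (X n - L) k"
    using complete[of X] cauchy2 by blast
  obtain N0 where N0: "\<forall>n\<ge>N0. vge ord (X n - L) 0" using L by blast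
  have "vge ord (X N0 - (X N0 - L)) 0" using inv[of N0] N0 vge_diff by blast
  then have L0: "vge ord L 0" by simp
  have "vge ord (L\<^sup>2 + L - w) k" for k
  proof -
    obtain N where N: "\<forall>n\<ge>N. vge ord (X n - L) k" using L by blast
    define n where "n = max N (nat k)"
    have a: "vge ord (X n - L) k" using N n_def by simp
    have b: "vge ord ((X n)\<^sup>2 + X n - w) k" using inv[of n] n_def vge_mono by fastforce
    have c: "vge ord (L + X n + 1) 0" proof -
      have "vge ord (L + X n) 0" using L0 inv[of n] vge_add by blast
      moreover have "vge ord 1 0" by (simp add: vge_one)
      ultimately show ?thesis using vge_add by blast
    qed
    have "vge ord ((X n - L) * (L + X n + 1)) (k + 0)" using vge_mult[OF a c] .
    then have v: "vge ord (((X n)\<^sup>2 + X n - w) - ((X n - L) * (L + X n + 1))) k"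
      using b vge_diff by simp
    have eq: "((X n)\<^sup>2 + X n - w) - ((X n - L) * (L + X n + 1)) = L\<^sup>2 + L - w"
      by (simp add: power2_eq_square algebra_simps)
    show ?thesis using v unfolding eq .
  qed
  then have "L\<^sup>2 + L - w = 0" using vge_all_zero by blast
  then show ?thesis using L0 by (intro exI[of _ L]) simp
qed

end


context dlf begin

definition Ov :: "'a set" where "Ov = {x. vge ord x 0}"
definition cng :: "'a \<Rightarrow> 'a \<Rightarrow> bool" where "cng x y \<longleftrightarrow> vge ord (x - y) 1"
definition cls :: "'a \<Rightarrow> 'a set" where "cls x = {y \<in> Ov. cng x y}"
definition rep :: "'a set \<Rightarrow> 'a" where "rep A = (SOME x. x \<in> A)"

lemma OO_iff[simp]: "x \<in> Ov \<longleftrightarrow> vge ord x 0" by (simp add: Ov_def)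

lemma cng_refl[simp]: "cng x x" by (simp add: cng_def)
lemma cng_sym: "cng x y \<Longrightarrow> cng y x"
  unfolding cng_def using vge_uminus[of "x - y" 1] by simp
lemma cng_trans: "cng x y \<Longrightarrow> cng y z \<Longrightarrow> cng x z"
  unfolding cng_def using vge_add[of "x - y" 1 "y - z"] by simp

lemma cls_eq: "x \<in> Ov \<Longrightarrow> y \<in> Ov \<Longrightarrow> cls x = cls y \<longleftrightarrow> cng x y"
proof
  assume "x \<in> Ov" "y \<in> Ov" "cls x = cls y"
  then have "y \<in> cls x" by (simp add: cls_def)
  then show "cng x y" by (simp add: cls_def)
next
  assume "cng x y"
  then show "cls x = cls y" unfolding cls_def using cng_trans cng_sym by blast
qed

lemma rep_in: "x \<in> Ov \<Longrightarrow> rep (cls x) \<in> Ov \<and> cng x (rep (cls x))"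
proof -
  assume "x \<in> Ov"
  then have "x \<in> cls x" by (simp add: cls_def)
  then have "rep (cls x) \<in> cls x" unfolding rep_def by (rule someI)
  then show ?thesis by (simp add: cls_def)
qed

lemma residue_finite_ax: "\<exists>S. finite S \<and> S \<subseteq> val_ring ord \<and>
        (\<forall>x\<in>val_ring ord. \<exists>s\<in>S. x = s \<or> 1 \<le> ord (x - s))"
  apply (insert F[unfolded dyadic_local_field_def])
  apply (elim conjE)
  apply assumption
  done

lemma finite_C: "finite (cls ` Ov)"
proof -
  obtain S where S: "finite S" "S \<subseteq> val_ring ord" "\<forall>x\<in>val_ring ord. \<exists>s\<in>S. x = s \<or> 1 \<le> ord (x - s)"
    using residue_finite_ax by blast
  have "cls ` Ov \<subseteq> cls ` S"
  proof
    fix A assume "A \<in> cls ` Ov"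
    then obtain x where x: "x \<in> Ov" "A = cls x" by blast
    then obtain s where s: "s \<in> S" "x = s \<or> 1 \<le> ord (x - s)" using S(3) val_ring_iff by auto
    then have "cng x s" unfolding cng_def vge_def by auto
    moreover have "s \<in> Ov" using s S(2) val_ring_iff by auto
    ultimately have "A = cls s" using x cls_eq by auto
    then show "A \<in> cls ` S" using s by blast
  qed
  then show ?thesis using S(1) finite_subset by blast
qed

lemma surj_mod:
  assumes fO: "\<And>x. x \<in> Ov \<Longrightarrow> f x \<in> Ov"
    and resp: "\<And>x y. x \<in> Ov \<Longrightarrow> y \<in> Ov \<Longrightarrow> cng x y \<Longrightarrow> cng (f x) (f y)"
    and inj: "\<And>x y. x \<in> Ov \<Longrightarrow> y \<in> Ov \<Longrightarrow> cng (f x) (f y) \<Longrightarrow> cng x y"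
    and y: "y \<in> Ov"
  shows "\<exists>x\<in>Ov. cng (f x) y"
proof -
  define h where "h A = cls (f (rep A))" for A
  have hc: "h (cls x) = cls (f x)" if "x \<in> Ov" for x
  proof -
    have "rep (cls x) \<in> Ov" "cng x (rep (cls x))" using rep_in[OF that] by auto
    then have "cng (f x) (f (rep (cls x)))" using resp that by blast
    then show ?thesis unfolding h_def using cls_eq fO that \<open>rep (cls x) \<in> Ov\<close> by metis
  qed
  have sub: "h ` (cls ` Ov) \<subseteq> cls ` Ov" using hc fO by auto
  have "inj_on h (cls ` Ov)"
  proof (rule inj_onI)
    fix A B assume "A \<in> cls ` Ov" "B \<in> cls ` Ov" "h A = h B"
    then obtain a b where ab: "a \<in> Ov" "b \<in> Ov" "A = cls a" "B = cls b" "cls (f a) = cls (f b)"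
      using hc by auto
    then have "cng (f a) (f b)" using cls_eq fO by blast
    then have "cng a b" using inj ab by blast
    then show "A = B" using ab cls_eq by blast
  qed
  then have "h ` (cls ` Ov) = cls ` Ov" using endo_inj_surj finite_C sub by blast
  then have "cls y \<in> h ` (cls ` Ov)" using y by blast
  then obtain x where x: "x \<in> Ov" "cls y = cls (f x)" using hc by auto
  then have "cng y (f x)" using cls_eq fO y by blast
  then show ?thesis using x cng_sym by blast
qed

lemma vge_sq1: "vge ord (z\<^sup>2) 1 \<Longrightarrow> vge ord z 1"
  by (cases "z = 0") (auto simp: vge_def ord_sq)

lemma frob_surj: "y \<in> Ov \<Longrightarrow> \<exists>x\<in>Ov. cng (x\<^sup>2) y"
proof (rule surj_mod)
  fix x assume "x \<in> Ov" then show "x\<^sup>2 \<in> Ov" using vge_mult[of x 0 x 0] by (simp add: power2_eq_square)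
next
  fix x y assume xy: "x \<in> Ov" "y \<in> Ov" "cng x y"
  have "vge ord (x + y) 0" using xy vge_add by simp
  then have "vge ord ((x - y) * (x + y)) (1 + 0)" using xy vge_mult unfolding cng_def by blast
  moreover have "(x - y) * (x + y) = x\<^sup>2 - y\<^sup>2" by (simp add: power2_eq_square algebra_simps)
  ultimately show "cng (x\<^sup>2) (y\<^sup>2)" unfolding cng_def by simp
next
  fix x y assume xy: "x \<in> Ov" "y \<in> Ov" "cng (x\<^sup>2) (y\<^sup>2)"
  have "vge ord (2 * y * (x - y)) (1 + 0)"
  proof -
    have "vge ord y 0" using xy by simp
    then have "vge ord (2 * y) (1 + 0)" using vge_mult[OF vge_two] by blast
    moreover have "vge ord (x - y) 0" using xy vge_diff by simp
    ultimately show ?thesis using vge_mult by fastforce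
  qed
  then have "vge ord ((x\<^sup>2 - y\<^sup>2) - 2 * y * (x - y)) 1" using xy vge_diff unfolding cng_def by simp
  moreover have "(x\<^sup>2 - y\<^sup>2) - 2 * y * (x - y) = (x - y)\<^sup>2" by (simp add: power2_eq_square algebra_simps)
  ultimately show "cng x y" unfolding cng_def using vge_sq1 by simp
qed

end


context dlf begin

definition phi :: "'a \<Rightarrow> 'a" where "phi x = x\<^sup>2 + x"
definition inT :: "'a \<Rightarrow> bool" where "inT w \<longleftrightarrow> (\<exists>x\<in>Ov. cng (phi x) w)"

lemma Ov_add: "x \<in> Ov \<Longrightarrow> y \<in> Ov \<Longrightarrow> x + y \<in> Ov" using vge_add by simp
lemma Ov_diff: "x \<in> Ov \<Longrightarrow> y \<in> Ov \<Longrightarrow> x - y \<in> Ov" using vge_diff by simp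
lemma Ov_mult: "x \<in> Ov \<Longrightarrow> y \<in> Ov \<Longrightarrow> x * y \<in> Ov" using vge_mult[of x 0 y 0] by simp
lemma Ov_1: "1 \<in> Ov" by (simp add: vge_one)

lemma phi_Ov: "x \<in> Ov \<Longrightarrow> phi x \<in> Ov"
  unfolding phi_def power2_eq_square using Ov_add Ov_mult by blast

lemma cng_mult: "vge ord a 1 \<Longrightarrow> b \<in> Ov \<Longrightarrow> vge ord (a * b) 1"
  using vge_mult[of a 1 b 0] by simp

lemma phi_resp: "x \<in> Ov \<Longrightarrow> y \<in> Ov \<Longrightarrow> cng x y \<Longrightarrow> cng (phi x) (phi y)"
proof -
  assume xy: "x \<in> Ov" "y \<in> Ov" "cng x y"
  have "x + y + 1 \<in> Ov" using xy Ov_add Ov_1 by blast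
  then have "vge ord ((x - y) * (x + y + 1)) 1" using xy cng_mult unfolding cng_def by blast
  moreover have "(x - y) * (x + y + 1) = phi x - phi y" by (simp add: phi_def power2_eq_square algebra_simps)
  ultimately show ?thesis unfolding cng_def by simp
qed

lemma two_mult: "x \<in> Ov \<Longrightarrow> vge ord (2 * x) 1"
  using vge_mult[OF vge_two, of x 0] by simp

lemma prod_vge1: "a \<in> Ov \<Longrightarrow> b \<in> Ov \<Longrightarrow> vge ord (a * b) 1 \<Longrightarrow> vge ord a 1 \<or> vge ord b 1"
  by (cases "a = 0"; cases "b = 0") (auto simp: vge_def ord_mult)

lemma phi_fiber: "x \<in> Ov \<Longrightarrow> y \<in> Ov \<Longrightarrow> cng (phi y) (phi x) \<Longrightarrow> cng y x \<or> cng y (x + 1)"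
proof -
  assume xy: "x \<in> Ov" "y \<in> Ov" "cng (phi y) (phi x)"
  have "(y - x) * (y + x + 1) = phi y - phi x" by (simp add: phi_def power2_eq_square algebra_simps)
  then have "vge ord ((y - x) * (y + x + 1)) 1" using xy(3) unfolding cng_def by simp
  moreover have "y - x \<in> Ov" "y + x + 1 \<in> Ov" using xy Ov_add Ov_diff Ov_1 by auto
  ultimately have "vge ord (y - x) 1 \<or> vge ord (y + x + 1) 1" using prod_vge1 by blast
  then show ?thesis
  proof
    assume "vge ord (y - x) 1" then show ?thesis unfolding cng_def by simp
  next
    assume a: "vge ord (y + x + 1) 1"
    have "vge ord (2 * (x + 1)) 1" using two_mult xy Ov_add Ov_1 by blast
    then have "vge ord ((y + x + 1) - 2 * (x + 1)) 1" using a vge_diff by blast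
    moreover have "(y + x + 1) - 2 * (x + 1) = y - (x + 1)" by (simp add: algebra_simps)
    ultimately have "cng y (x + 1)" unfolding cng_def by metis
    then show ?thesis by blast
  qed
qed

lemma not_cng_succ: "\<not> cng x (x + 1)"
  unfolding cng_def by (simp add: vge_def)

lemma phi_add: "x \<in> Ov \<Longrightarrow> y \<in> Ov \<Longrightarrow> cng (phi y - phi x) (phi (y - x))"
proof -
  assume xy: "x \<in> Ov" "y \<in> Ov"
  have eq: "(phi y - phi x) - phi (y - x) = 2 * (x * (y - x))"
    by (simp add: phi_def power2_eq_square algebra_simps)
  have v: "vge ord (2 * (x * (y - x))) 1" using two_mult xy Ov_mult Ov_diff by blast
  show ?thesis unfolding cng_def eq by (rule v)
qed

definition Phi :: "'a set \<Rightarrow> 'a set" where "Phi A = cls (phi (rep A))"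

lemma Phi_cls: "x \<in> Ov \<Longrightarrow> Phi (cls x) = cls (phi x)"
proof -
  assume x: "x \<in> Ov"
  have "rep (cls x) \<in> Ov" "cng x (rep (cls x))" using rep_in[OF x] by auto
  then have "cng (phi x) (phi (rep (cls x)))" using phi_resp x by blast
  then show ?thesis unfolding Phi_def using cls_eq phi_Ov x \<open>rep (cls x) \<in> Ov\<close> by metis
qed

lemma fiber: "x \<in> Ov \<Longrightarrow> {A \<in> cls ` Ov. Phi A = cls (phi x)} = {cls x, cls (x + 1)}"
proof
  assume x: "x \<in> Ov"
  show "{A \<in> cls ` Ov. Phi A = cls (phi x)} \<subseteq> {cls x, cls (x + 1)}"
  proof
    fix A assume "A \<in> {A \<in> cls ` Ov. Phi A = cls (phi x)}"
    then obtain y where y: "y \<in> Ov" "A = cls y" "cls (phi y) = cls (phi x)" using Phi_cls by auto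
    then have "cng (phi y) (phi x)" using cls_eq phi_Ov x by blast
    then have "cng y x \<or> cng y (x + 1)" using phi_fiber x y by blast
    then show "A \<in> {cls x, cls (x + 1)}" using y cls_eq x Ov_add Ov_1 by blast
  qed
next
  assume x: "x \<in> Ov"
  have x1: "x + 1 \<in> Ov" using x Ov_add Ov_1 by blast
  have "vge ord (2 * (x + 1)) 1" using two_mult x1 by blast
  moreover have "phi (x + 1) - phi x = 2 * (x + 1)" by (simp add: phi_def power2_eq_square algebra_simps)
  ultimately have "cng (phi (x + 1)) (phi x)" unfolding cng_def by simp
  then have "Phi (cls (x + 1)) = cls (phi x)" using Phi_cls x1 cls_eq phi_Ov x by metis
  then show "{cls x, cls (x + 1)} \<subseteq> {A \<in> cls ` Ov. Phi A = cls (phi x)}"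
    using x x1 Phi_cls by auto
qed

lemma card_C: "card (cls ` Ov) = 2 * card (Phi ` cls ` Ov)"
proof -
  let ?C = "cls ` Ov" and ?I = "Phi ` cls ` Ov"
  define fb where "fb B = {A \<in> ?C. Phi A = B}" for B
  have un: "?C = \<Union> (fb ` ?I)" unfolding fb_def by auto
  have fin: "finite ?I" using finite_C by blast
  have c2: "card (fb B) = 2" if "B \<in> ?I" for B
  proof -
    obtain x where x: "x \<in> Ov" "B = cls (phi x)" using \<open>B \<in> ?I\<close> Phi_cls by auto
    have "fb B = {cls x, cls (x + 1)}" unfolding fb_def x(2) using fiber[OF x(1)] .
    moreover have "cls x \<noteq> cls (x + 1)" using cls_eq x(1) Ov_add Ov_1 not_cng_succ by blast
    ultimately show ?thesis by simp
  qed
  have "card ?C = card (\<Union> (fb ` ?I))" by (rule arg_cong[where f=card, OF un])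
  also have "\<dots> = (\<Sum>B\<in>?I. card (fb B))"
    by (rule card_UN_disjoint) (auto simp: fb_def fin finite_C)
  also have "\<dots> = (\<Sum>B\<in>?I. 2)" using c2 by simp
  finally show ?thesis by simp
qed

lemma T_dich:
  assumes w: "w \<in> Ov" and c: "c \<in> Ov" and nw: "\<not> inT w" and nc: "\<not> inT c"
  shows "inT (w - c)"
proof -
  let ?C = "cls ` Ov" and ?I = "Phi ` cls ` Ov"
  define \<tau> where "\<tau> A = cls (c + rep A)" for A
  have tc: "\<tau> (cls x) = cls (c + x)" if "x \<in> Ov" for x
  proof -
    have "rep (cls x) \<in> Ov" "cng x (rep (cls x))" using rep_in[OF that] by auto
    moreover have "cng (c + x) (c + rep (cls x))" using \<open>cng x (rep (cls x))\<close> unfolding cng_def by simp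
    ultimately have "cls (c + x) = cls (c + rep (cls x))" using cls_eq[of "c + x" "c + rep (cls x)"] Ov_add c that by blast
    then show ?thesis unfolding \<tau>_def by simp
  qed
  have IC: "?I \<subseteq> ?C" using Phi_cls phi_Ov by auto
  have fin: "finite ?C" by (rule finite_C)
  have inj: "inj_on \<tau> ?C"
  proof (rule inj_onI)
    fix A B assume AB: "A \<in> ?C" "B \<in> ?C" "\<tau> A = \<tau> B"
    then obtain a b where ab0: "a \<in> Ov" "b \<in> Ov" "A = cls a" "B = cls b" by blast
    then have "cls (c + a) = cls (c + b)" using tc AB(3) by simp
    then have "cng (c + a) (c + b)" using cls_eq[of "c + a" "c + b"] Ov_add c ab0 by blast
    then have "cng a b" unfolding cng_def by simp
    then show "A = B" using ab0 cls_eq[of a b] by simp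
  qed
  have sub: "\<tau> ` ?I \<subseteq> ?C - ?I"
  proof
    fix A assume "A \<in> \<tau> ` ?I"
    then obtain x where x0: "x \<in> Ov" "A = \<tau> (Phi (cls x))" by blast
    then have x: "x \<in> Ov" "A = cls (c + phi x)" using Phi_cls tc phi_Ov by simp_all
    have AC: "A \<in> ?C" using x Ov_add c phi_Ov by blast
    have "A \<notin> ?I"
    proof
      assume "A \<in> ?I"
      then obtain y where y0: "y \<in> Ov" "A = Phi (cls y)" by blast
      then have y: "y \<in> Ov" "A = cls (phi y)" using Phi_cls by simp_all
      then have "cls (c + phi x) = cls (phi y)" using x by simp
      then have "cng (c + phi x) (phi y)" using cls_eq[of "c + phi x" "phi y"] x y Ov_add c phi_Ov by blast
      then have "cng (phi y - phi x) c" unfolding cng_def using vge_uminus[of "c + phi x - phi y" 1]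
        by (simp add: algebra_simps)
      then have "cng (phi (y - x)) c" using phi_add[OF x(1) y(1)] cng_trans cng_sym by blast
      then show False using nc y(1) x(1) Ov_diff unfolding inT_def by blast
    qed
    then show "A \<in> ?C - ?I" using AC by blast
  qed
  have "inj_on \<tau> ?I" using inj_on_subset[OF inj IC] .
  then have "card (\<tau> ` ?I) = card ?I" by (rule card_image)
  moreover have "card (?C - ?I) = card ?C - card ?I" using card_Diff_subset[OF finite_subset[OF IC fin] IC] .
  moreover have "card ?C = 2 * card ?I" by (rule card_C)
  ultimately have "card (\<tau> ` ?I) = card (?C - ?I)" by linarith
  then have tI: "\<tau> ` ?I = ?C - ?I" using card_subset_eq[OF _ sub] fin by blast
  have "cls w \<notin> ?I"
  proof
    assume "cls w \<in> ?I"
    then obtain y where y0: "y \<in> Ov" "cls w = Phi (cls y)" by blast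
    then have "cls w = cls (phi y)" using Phi_cls by simp
    then have "cng w (phi y)" using cls_eq[of w "phi y"] w phi_Ov y0(1) by blast
    then have "cng (phi y) w" by (rule cng_sym)
    then show False using nw y0(1) unfolding inT_def by blast
  qed
  then have "cls w \<in> ?C - ?I" using w by blast
  then have "cls w \<in> \<tau> ` ?I" using tI by simp
  then obtain x where x0: "x \<in> Ov" "cls w = \<tau> (Phi (cls x))" by blast
  then have "cls w = cls (c + phi x)" using Phi_cls tc phi_Ov by simp
  then have "cng w (c + phi x)" using cls_eq[of w "c + phi x"] w Ov_add c phi_Ov x0(1) by blast
  then have "cng (phi x) (w - c)" unfolding cng_def using vge_uminus[of "w - (c + phi x)" 1]
    by (simp add: algebra_simps)
  then show ?thesis unfolding inT_def using x0(1) by blast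
qed

end


locale dlfD = dlf +
  fixes \<rho> \<Delta> :: 'a
  assumes rho: "\<rho> \<noteq> 0" "ord \<rho> = 0"
    and Dl: "\<Delta> = 1 - 4 * \<rho>"
    and Dfr: "dfrak ord \<Delta> = principal ord 4"
begin

lemma rho_Ov: "\<rho> \<in> Ov" using rho by (simp add: vge_def)

lemma four_vge: "vge ord 4 (2 * ord 2)" using ord_4 by (simp add: vge_def)

lemma four_mult: "x \<in> Ov \<Longrightarrow> vge ord (4 * x) 1"
proof -
  assume "x \<in> Ov"
  then have "vge ord (4 * x) (2 * ord 2 + 0)" using vge_mult[OF four_vge, of x 0] by simp
  then show ?thesis using vge_mono e_pos by fastforce
qed

lemma Delta_unit: "\<Delta> \<noteq> 0 \<and> ord \<Delta> = 0"
  using unit_minus[OF four_mult[OF rho_Ov]] Dl by simp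

lemma Delta_nonsq: "\<Delta> \<noteq> y\<^sup>2"
proof
  assume h: "\<Delta> = y\<^sup>2"
  have "(4::'a) \<in> principal ord 4" unfolding principal_def val_ring_iff
    by (rule CollectI, rule exI[of _ 1]) (simp add: vge_one)
  then have "(4::'a) \<in> principal ord (\<Delta> - y\<^sup>2)" using Dfr unfolding dfrak_def by blast
  then have "(4::'a) = 0" using h unfolding principal_def by simp
  then show False using four_nz by simp
qed

lemma sq_from_phi: "z\<^sup>2 + z = w \<Longrightarrow> z \<in> Ov \<Longrightarrow> (1 + 2 * z)\<^sup>2 = 1 + 4 * w \<and> 1 + 2 * z \<noteq> 0"
proof -
  assume zw: "z\<^sup>2 + z = w" and z: "z \<in> Ov"
  have "(1 + 2 * z)\<^sup>2 = 1 + 4 * (z\<^sup>2 + z)" by (simp add: power2_eq_square algebra_simps)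
  then show ?thesis using zw unit_plus[OF two_mult[OF z]] by simp
qed

lemma hensel': "w \<in> Ov \<Longrightarrow> inT w \<Longrightarrow> \<exists>z\<in>Ov. z\<^sup>2 + z = w"
proof -
  assume w: "w \<in> Ov" and "inT w"
  then obtain x where x: "x \<in> Ov" "cng (phi x) w" unfolding inT_def by blast
  have "vge ord (x\<^sup>2 + x - w) 1" using x(2) unfolding cng_def phi_def by simp
  then show ?thesis using hensel[of w x] w x by auto
qed

lemma not_inT_rho: "\<not> inT (- \<rho>)"
proof
  assume "inT (- \<rho>)"
  moreover have "- \<rho> \<in> Ov" using rho_Ov by simp
  ultimately have "\<exists>z\<in>Ov. z\<^sup>2 + z = - \<rho>" using hensel' by blast
  then obtain z where z: "z \<in> Ov" "z\<^sup>2 + z = - \<rho>" by blast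
  then have "(1 + 2 * z)\<^sup>2 = 1 + 4 * (- \<rho>)" using sq_from_phi by blast
  then have "\<Delta> = (1 + 2 * z)\<^sup>2" using Dl by simp
  then show False using Delta_nonsq by blast
qed

lemma sq_class: "w \<in> Ov \<Longrightarrow> \<exists>t. t \<noteq> 0 \<and> (1 + 4 * w = t\<^sup>2 \<or> 1 + 4 * w = \<Delta> * t\<^sup>2)"
proof (cases "inT w")
  case True
  assume w: "w \<in> Ov"
  then obtain z where "z \<in> Ov" "z\<^sup>2 + z = w" using hensel' True by blast
  then show ?thesis using sq_from_phi by metis
next
  case False
  assume w: "w \<in> Ov"
  have mr: "- \<rho> \<in> Ov" using rho_Ov by simp
  have "inT (w - (- \<rho>))" using T_dich[OF w mr False not_inT_rho] .
  then have i1: "inT (w + \<rho>)" by simp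
  define w' where "w' = (w + \<rho>) / \<Delta>"
  have wr: "w + \<rho> \<in> Ov" using w rho_Ov Ov_add by blast
  have w'O: "w' \<in> Ov" unfolding w'_def using wr Delta_unit by (simp add: vge_divide_iff)
  have "w' - (w + \<rho>) = (w + \<rho>) * (1 - \<Delta>) / \<Delta>"
    unfolding w'_def using Delta_unit by (simp add: field_simps)
  moreover have "1 - \<Delta> = 4 * \<rho>" using Dl by simp
  ultimately have "w' - (w + \<rho>) = (w + \<rho>) * (4 * \<rho>) / \<Delta>" by simp
  moreover have "vge ord ((w + \<rho>) * (4 * \<rho>)) 1"
    using vge_mult[of "w + \<rho>" 0 "4 * \<rho>" 1] wr four_mult[OF rho_Ov] by simp
  ultimately have "vge ord (w' - (w + \<rho>)) 1" using Delta_unit by (simp add: vge_divide_iff)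
  then have "cng (w + \<rho>) w'" unfolding cng_def using vge_uminus[of "w' - (w + \<rho>)" 1] by simp
  then have "inT w'" using i1 cng_trans unfolding inT_def by blast
  then obtain z where z: "z \<in> Ov" "z\<^sup>2 + z = w'" using hensel' w'O by blast
  then have s: "(1 + 2 * z)\<^sup>2 = 1 + 4 * w'" "1 + 2 * z \<noteq> 0" using sq_from_phi by auto
  have "\<Delta> * (1 + 4 * w') = \<Delta> + 4 * (w + \<rho>)" unfolding w'_def using Delta_unit by (simp add: field_simps)
  also have "\<dots> = 1 + 4 * w" using Dl by (simp add: algebra_simps)
  finally have "\<Delta> * (1 + 4 * w') = 1 + 4 * w" .
  then show ?thesis using s by (metis)
qed

lemma norm_surj: "c \<noteq> 0 \<Longrightarrow> ord c = 0 \<Longrightarrow> \<exists>x y. x\<^sup>2 - \<Delta> * y\<^sup>2 = c"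
proof -
  assume c: "c \<noteq> 0" "ord c = 0"
  have cr: "c / \<rho> \<in> Ov" using c rho by (simp add: vge_def ord_divide)
  obtain b where b: "b \<in> Ov" "cng (b\<^sup>2) (c / \<rho>)" using frob_surj[OF cr] by blast
  have cru: "c / \<rho> \<noteq> 0" "ord (c / \<rho>) = 0" using c rho by (simp_all add: ord_divide)
  have "vge ord (b\<^sup>2 - c / \<rho>) (ord (c / \<rho>) + 1)" using b(2) cru unfolding cng_def by simp
  then have "c / \<rho> + (b\<^sup>2 - c / \<rho>) \<noteq> 0 \<and> ord (c / \<rho> + (b\<^sup>2 - c / \<rho>)) = ord (c / \<rho>)"
    using ord_add_strict[OF cru(1)] by blast
  moreover have "c / \<rho> + (b\<^sup>2 - c / \<rho>) = b\<^sup>2" by simp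
  ultimately have b2: "b\<^sup>2 \<noteq> 0" "ord (b\<^sup>2) = 0" using cru by auto
  then have bnz: "b \<noteq> 0" by simp
  define w where "w = c / b\<^sup>2 - \<rho>"
  have weq: "w = - \<rho> * (b\<^sup>2 - c / \<rho>) / b\<^sup>2" unfolding w_def using b2 rho by (simp add: field_simps)
  have "vge ord (- \<rho> * (b\<^sup>2 - c / \<rho>)) (0 + 1)"
    using vge_mult[of "-\<rho>" 0 "b\<^sup>2 - c / \<rho>" 1] rho_Ov b(2) unfolding cng_def by simp
  then have w1: "vge ord w 1" unfolding weq using b2 by (simp add: vge_divide_iff)
  then have wO: "w \<in> Ov" using vge_mono by simp
  have "vge ord (0\<^sup>2 + 0 - w) 1" using w1 by simp
  then obtain t where t: "vge ord t 0" "t\<^sup>2 + t = w" using hensel[of w 0] wO by auto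
  define a where "a = b * t"
  have "a\<^sup>2 + a * b + \<rho> * b\<^sup>2 = b\<^sup>2 * (t\<^sup>2 + t + \<rho>)" unfolding a_def by (simp add: power2_eq_square algebra_simps)
  also have "\<dots> = c" using t(2) b2 unfolding w_def by (simp add: field_simps)
  finally have ac: "a\<^sup>2 + a * b + \<rho> * b\<^sup>2 = c" .
  have "(a + b / 2)\<^sup>2 - \<Delta> * (b / 2)\<^sup>2 = a\<^sup>2 + a * b + \<rho> * b\<^sup>2"
  proof -
    have h: "(16::'a) = 4 * 4" by simp
    have "(4::'a) * 4 \<noteq> 0" using four_nz by (simp only: mult_eq_0_iff) simp
    then have "(16::'a) \<noteq> 0" using h by metis
    then show ?thesis using two_nz four_nz unfolding Dl by (simp add: power2_eq_square field_simps)
  qed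
  then show ?thesis using ac by metis
qed

end


definition idm :: "nat \<Rightarrow> nat \<Rightarrow> 'a::field" where "idm i k = (if i = k then 1 else 0)"
definition cm :: "nat \<Rightarrow> (nat \<Rightarrow> nat \<Rightarrow> 'a::field) \<Rightarrow> (nat \<Rightarrow> nat \<Rightarrow> 'a) \<Rightarrow> nat \<Rightarrow> nat \<Rightarrow> 'a" where
  "cm n P G k l = (\<Sum>i<n. \<Sum>j<n. P i k * G i j * P j l)"
definition mm :: "nat \<Rightarrow> (nat \<Rightarrow> nat \<Rightarrow> 'a::field) \<Rightarrow> (nat \<Rightarrow> nat \<Rightarrow> 'a) \<Rightarrow> nat \<Rightarrow> nat \<Rightarrow> 'a" where
  "mm n A B i k = (\<Sum>r<n. A i r * B r k)"

lemma gram_iso_alt: "gram_iso n G H \<longleftrightarrow> (\<exists>P Q.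
     (\<forall>k<n. \<forall>l<n. mm n P Q k l = idm k l) \<and> (\<forall>k<n. \<forall>l<n. mm n Q P k l = idm k l) \<and>
     (\<forall>k<n. \<forall>l<n. cm n P G k l = H k l))"
  unfolding gram_iso_def mm_def cm_def idm_def by simp

lemma gram_isoI: "(\<And>k l. k < n \<Longrightarrow> l < n \<Longrightarrow> mm n P Q k l = idm k l) \<Longrightarrow>
   (\<And>k l. k < n \<Longrightarrow> l < n \<Longrightarrow> mm n Q P k l = idm k l) \<Longrightarrow>
   (\<And>k l. k < n \<Longrightarrow> l < n \<Longrightarrow> cm n P G k l = H k l) \<Longrightarrow> gram_iso n G H"
  unfolding gram_iso_alt by blast

lemma gram_cong: "gram_iso n G H \<Longrightarrow> (\<And>i j. i < n \<Longrightarrow> j < n \<Longrightarrow> G i j = G' i j) \<Longrightarrow>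
   (\<And>i j. i < n \<Longrightarrow> j < n \<Longrightarrow> H i j = H' i j) \<Longrightarrow> gram_iso n G' H'"
proof -
  assume g: "gram_iso n G H" and gg: "\<And>i j. i < n \<Longrightarrow> j < n \<Longrightarrow> G i j = G' i j"
    and hh: "\<And>i j. i < n \<Longrightarrow> j < n \<Longrightarrow> H i j = H' i j"
  from g obtain P Q where PQ: "\<forall>k<n. \<forall>l<n. mm n P Q k l = idm k l" "\<forall>k<n. \<forall>l<n. mm n Q P k l = idm k l"
    "\<forall>k<n. \<forall>l<n. cm n P G k l = H k l" unfolding gram_iso_alt by blast
  have "cm n P G' k l = H' k l" if "k < n" "l < n" for k l
  proof -
    have "cm n P G' k l = cm n P G k l" unfolding cm_def using gg by (intro sum.cong refl) auto
    then show ?thesis using PQ(3) hh that by simp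
  qed
  then show ?thesis using PQ(1,2) by (intro gram_isoI) auto
qed

lemma ifz1[simp]: "(if P then 1 else 0) * (x::'a::field) = (if P then x else 0)" by simp
lemma ifz2[simp]: "(x::'a::field) * (if P then 1 else 0) = (if P then x else 0)" by simp

lemma sum_delta_lt: "k < (n::nat) \<Longrightarrow> (\<Sum>i<n. (if i = k then 1 else 0) * f i) = (f k :: 'a::field)"
  by (simp add: sum.delta)

lemma sum_delta_lt': "k < (n::nat) \<Longrightarrow> (\<Sum>i<n. f i * (if i = k then 1 else 0)) = (f k :: 'a::field)"
  by (simp add: sum.delta)

lemma sum_idm_left: "k < (n::nat) \<Longrightarrow> (\<Sum>i<n. idm k i * f i) = (f k :: 'a::field)"
  unfolding idm_def by (simp add: sum.delta)

lemma gram_refl: "gram_iso n G G"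
proof (rule gram_isoI[where P = idm and Q = idm])
  fix k l assume "k < n" "l < n"
  then show "mm n idm idm k l = idm k l" unfolding mm_def idm_def by (simp add: sum.delta)
  then show "mm n idm idm k l = idm k l" .
  show "cm n idm G k l = G k l" unfolding cm_def idm_def using \<open>k < n\<close> \<open>l < n\<close>
    by (simp add: sum.delta)
qed

lemma cm_as_mm: "cm n P G k l = (\<Sum>a<n. \<Sum>b<n. P a k * G a b * P b l)"
  unfolding cm_def ..

lemma mm_assoc: "mm n (mm n A B) C i k = mm n A (mm n B C) i k"
  unfolding mm_def by (simp add: sum_distrib_left sum_distrib_right mult.assoc) (rule sum.swap)

lemma gram_trans:
  assumes g1: "gram_iso n G H" and g2: "gram_iso n H K"
  shows "gram_iso n G K"
proof -
  from g1 obtain P1 Q1 where A: "\<forall>k<n. \<forall>l<n. mm n P1 Q1 k l = idm k l" "\<forall>k<n. \<forall>l<n. mm n Q1 P1 k l = idm k l"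
    "\<forall>k<n. \<forall>l<n. cm n P1 G k l = H k l" unfolding gram_iso_alt by blast
  from g2 obtain P2 Q2 where B: "\<forall>k<n. \<forall>l<n. mm n P2 Q2 k l = idm k l" "\<forall>k<n. \<forall>l<n. mm n Q2 P2 k l = idm k l"
    "\<forall>k<n. \<forall>l<n. cm n P2 H k l = K k l" unfolding gram_iso_alt by blast
  have inv: "mm n (mm n X1 X2) (mm n Y2 Y1) k l = idm k l"
    if X: "\<forall>k<n. \<forall>l<n. mm n X1 Y1 k l = idm k l" and Y: "\<forall>k<n. \<forall>l<n. mm n X2 Y2 k l = idm k l"
      and kl: "k < n" "l < n" for X1 X2 Y1 Y2 :: "nat \<Rightarrow> nat \<Rightarrow> 'a" and k l
  proof -
    have "mm n (mm n X1 X2) (mm n Y2 Y1) k l = mm n X1 (mm n X2 (mm n Y2 Y1)) k l" by (rule mm_assoc)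
    also have "\<dots> = mm n X1 (mm n (mm n X2 Y2) Y1) k l" unfolding mm_def[of n X1] by (simp add: mm_assoc)
    also have "\<dots> = mm n X1 Y1 k l"
    proof -
      have "mm n (mm n X2 Y2) Y1 r l = Y1 r l" if "r < n" for r
      proof -
        have "mm n (mm n X2 Y2) Y1 r l = (\<Sum>r'<n. idm r r' * Y1 r' l)"
          unfolding mm_def[of n "mm n X2 Y2"] using Y that by (intro sum.cong refl) auto
        then show ?thesis using sum_idm_left[OF that] by simp
      qed
      then show ?thesis unfolding mm_def[of n X1] by (intro sum.cong refl) auto
    qed
    also have "\<dots> = idm k l" using X kl by simp
    finally show ?thesis .
  qed
  have c: "cm n (mm n P1 P2) G k l = K k l" if kl: "k < n" "l < n" for k l
  proof -
    have "K k l = (\<Sum>i<n. \<Sum>j<n. P2 i k * H i j * P2 j l)" using B(3) kl unfolding cm_def by simp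
    also have "\<dots> = (\<Sum>i<n. \<Sum>j<n. P2 i k * (\<Sum>a<n. \<Sum>b<n. P1 a i * G a b * P1 b j) * P2 j l)"
      using A(3) unfolding cm_def by (intro sum.cong refl) auto
    also have "\<dots> = (\<Sum>i<n. \<Sum>j<n. \<Sum>a<n. \<Sum>b<n. P2 i k * P1 a i * G a b * P1 b j * P2 j l)"
      by (simp add: sum_distrib_left sum_distrib_right mult.assoc)
    also have "\<dots> = (\<Sum>i<n. \<Sum>a<n. \<Sum>j<n. \<Sum>b<n. P2 i k * P1 a i * G a b * P1 b j * P2 j l)"
      by (rule sum.cong[OF refl], rule sum.swap)
    also have "\<dots> = (\<Sum>a<n. \<Sum>i<n. \<Sum>j<n. \<Sum>b<n. P2 i k * P1 a i * G a b * P1 b j * P2 j l)"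
      by (rule sum.swap)
    also have "\<dots> = (\<Sum>a<n. \<Sum>i<n. \<Sum>b<n. \<Sum>j<n. P2 i k * P1 a i * G a b * P1 b j * P2 j l)"
      by (rule sum.cong[OF refl], rule sum.cong[OF refl], rule sum.swap)
    also have "\<dots> = (\<Sum>a<n. \<Sum>b<n. \<Sum>i<n. \<Sum>j<n. P2 i k * P1 a i * G a b * P1 b j * P2 j l)"
      by (rule sum.cong[OF refl], rule sum.swap)
    also have "\<dots> = (\<Sum>a<n. \<Sum>b<n. (\<Sum>i<n. P1 a i * P2 i k) * G a b * (\<Sum>j<n. P1 b j * P2 j l))"
      by (simp add: sum_distrib_left sum_distrib_right mult.assoc mult.left_commute mult.commute)
    also have "\<dots> = cm n (mm n P1 P2) G k l" unfolding cm_def mm_def ..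
    finally show ?thesis by simp
  qed
  show ?thesis
    by (rule gram_isoI[where P = "mm n P1 P2" and Q = "mm n Q2 Q1"])
       (use inv[OF A(1) B(1)] inv[OF B(2) A(2)] c in auto)
qed



lemma sum_split: "(\<Sum>i<(n1::nat)+n2. f i) = (\<Sum>i<n1. f i) + (\<Sum>i<n2. f (i + n1))"
  by (induction n2) (auto simp: add.commute add.left_commute)

lemma mm_osum: "mm (n1+n2) (osum n1 A1 A2) (osum n1 B1 B2) k l = osum n1 (mm n1 A1 B1) (mm n2 A2 B2) k l"
  unfolding mm_def sum_split osum_def by (auto intro!: sum.cong)

lemma cm_osum: "cm (n1+n2) (osum n1 P1 P2) (osum n1 G1 G2) k l = osum n1 (cm n1 P1 G1) (cm n2 P2 G2) k l"
  unfolding cm_def sum_split osum_def by (auto intro!: sum.cong)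

lemma idm_osum: "idm k l = osum n1 idm idm k l"
  unfolding osum_def idm_def by auto

lemma gram_osum:
  assumes g1: "gram_iso n1 G1 H1" and g2: "gram_iso n2 G2 H2"
  shows "gram_iso (n1 + n2) (osum n1 G1 G2) (osum n1 H1 H2)"
proof -
  from g1 obtain P1 Q1 where A: "\<forall>k<n1. \<forall>l<n1. mm n1 P1 Q1 k l = idm k l" "\<forall>k<n1. \<forall>l<n1. mm n1 Q1 P1 k l = idm k l"
    "\<forall>k<n1. \<forall>l<n1. cm n1 P1 G1 k l = H1 k l" unfolding gram_iso_alt by blast
  from g2 obtain P2 Q2 where B: "\<forall>k<n2. \<forall>l<n2. mm n2 P2 Q2 k l = idm k l" "\<forall>k<n2. \<forall>l<n2. mm n2 Q2 P2 k l = idm k l"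
    "\<forall>k<n2. \<forall>l<n2. cm n2 P2 G2 k l = H2 k l" unfolding gram_iso_alt by blast
  have e1: "osum n1 (mm n1 X1 Y1) (mm n2 X2 Y2) k l = idm k l"
    if "\<forall>k<n1. \<forall>l<n1. mm n1 X1 Y1 k l = idm k l" "\<forall>k<n2. \<forall>l<n2. mm n2 X2 Y2 k l = idm k l"
       "k < n1 + n2" "l < n1 + n2" for X1 Y1 X2 Y2 :: "nat \<Rightarrow> nat \<Rightarrow> 'a" and k l
    using that unfolding osum_def idm_def by auto
  show ?thesis
  proof (rule gram_isoI[where P = "osum n1 P1 P2" and Q = "osum n1 Q1 Q2"])
    fix k l assume kl: "k < n1 + n2" "l < n1 + n2"
    show "mm (n1 + n2) (osum n1 P1 P2) (osum n1 Q1 Q2) k l = idm k l"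
      unfolding mm_osum using e1[OF A(1) B(1) kl] .
    show "mm (n1 + n2) (osum n1 Q1 Q2) (osum n1 P1 P2) k l = idm k l"
      unfolding mm_osum using e1[OF A(2) B(2) kl] .
    show "cm (n1 + n2) (osum n1 P1 P2) (osum n1 G1 G2) k l = osum n1 H1 H2 k l"
      unfolding cm_osum using A(3) B(3) kl unfolding osum_def by auto
  qed
qed

lemma gram_perm:
  assumes b: "bij_betw \<sigma> {..<n} {..<n}" and h: "\<And>k l. k < n \<Longrightarrow> l < n \<Longrightarrow> H k l = G (\<sigma> k) (\<sigma> l)"
  shows "gram_iso n G H"
proof (rule gram_isoI[where P = "\<lambda>i k. idm i (\<sigma> k)" and Q = "\<lambda>k i. idm i (\<sigma> k)"])
  fix k l assume kl: "k < n" "l < n"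
  have sk: "\<sigma> k < n" "\<sigma> l < n" using b kl unfolding bij_betw_def by auto
  have "mm n (\<lambda>i k. idm i (\<sigma> k)) (\<lambda>k i. idm i (\<sigma> k)) k l = (\<Sum>i<n. idm k (\<sigma> i) * idm l (\<sigma> i))"
    unfolding mm_def ..
  also have "\<dots> = (\<Sum>j<n. idm k j * idm l j)"
    using sum.reindex_bij_betw[OF b, of "\<lambda>j. idm k j * idm l j"] .
  also have "\<dots> = idm k l" using kl unfolding idm_def by (simp add: sum.delta)
  finally show "mm n (\<lambda>i k. idm i (\<sigma> k)) (\<lambda>k i. idm i (\<sigma> k)) k l = idm k l" .
  have "mm n (\<lambda>k i. idm i (\<sigma> k)) (\<lambda>i k. idm i (\<sigma> k)) k l = idm (\<sigma> k) (\<sigma> l)"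
    unfolding mm_def idm_def using sk by (simp add: sum.delta)
  also have "\<dots> = idm k l" using b kl unfolding bij_betw_def inj_on_def idm_def by auto
  finally show "mm n (\<lambda>k i. idm i (\<sigma> k)) (\<lambda>i k. idm i (\<sigma> k)) k l = idm k l" .
  show "cm n (\<lambda>i k. idm i (\<sigma> k)) G k l = H k l"
    unfolding cm_def idm_def using sk h kl by (simp add: sum.delta)
qed

lemma sum2: "(\<Sum>i<(2::nat). f i) = f 0 + f 1"
  by (simp add: numeral_2_eq_2)

lemma lt2: "(k::nat) < 2 \<Longrightarrow> k = 0 \<or> k = 1" by arith

definition m2 :: "'a \<Rightarrow> 'a \<Rightarrow> 'a \<Rightarrow> 'a \<Rightarrow> nat \<Rightarrow> nat \<Rightarrow> 'a::field" where
  "m2 p q r s i k = (if i = 0 then (if k = 0 then p else q) else (if k = 0 then r else s))"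

lemma gram_iso2d:
  fixes p q r s :: "'a::field"
  assumes det: "p * s - q * r \<noteq> 0"
    and h00: "H 0 0 = p * p * g 0 + r * r * g 1"
    and h01: "H 0 1 = p * q * g 0 + r * s * g 1"
    and h10: "H 1 0 = p * q * g 0 + r * s * g 1"
    and h11: "H 1 1 = q * q * g 0 + s * s * g 1"
  shows "gram_iso 2 (diagm g) H"
proof (rule gram_isoI[where P = "m2 p q r s" and
      Q = "m2 (s / (p * s - q * r)) (- q / (p * s - q * r)) (- r / (p * s - q * r)) (p / (p * s - q * r))"])
  fix k l :: nat assume kl: "k < 2" "l < 2"
  then have kk: "k = 0 \<or> k = 1" "l = 0 \<or> l = 1" using lt2 by auto
  have "(p * s - q * r) * (p * s - q * r) \<noteq> 0" using det by simp
  moreover have "(p * s - q * r) * (p * s - q * r) = p * (p * (s * s)) + q * (q * (r * r)) - p * (q * (r * (s * 2)))"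
    by (simp add: algebra_simps)
  ultimately have det2: "p * (p * (s * s)) + q * (q * (r * r)) \<noteq> p * (q * (r * (s * 2)))" by simp
  show "mm 2 (m2 p q r s) (m2 (s / (p * s - q * r)) (- q / (p * s - q * r)) (- r / (p * s - q * r)) (p / (p * s - q * r))) k l = idm k l"
    using kk det det2 unfolding mm_def sum2 m2_def idm_def by (auto simp: field_simps)
  show "mm 2 (m2 (s / (p * s - q * r)) (- q / (p * s - q * r)) (- r / (p * s - q * r)) (p / (p * s - q * r))) (m2 p q r s) k l = idm k l"
    using kk det det2 unfolding mm_def sum2 m2_def idm_def by (auto simp: field_simps)
  show "cm 2 (m2 p q r s) (diagm g) k l = H k l"
    using kk h00 h01 h10 h11 unfolding cm_def sum2 m2_def diagm_def by (auto simp: algebra_simps)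
qed

lemma gram_iso1:
  assumes t: "t \<noteq> 0" and h: "H 0 0 = t * t * G 0 0"
  shows "gram_iso 1 G H"
proof (rule gram_isoI[where P = "\<lambda>i k. t" and Q = "\<lambda>i k. inverse t"])
  fix k l :: nat assume "k < 1" "l < 1"
  then have "k = 0" "l = 0" by auto
  then show "mm 1 (\<lambda>i k. t) (\<lambda>i k. inverse t) k l = idm k l" "mm 1 (\<lambda>i k. inverse t) (\<lambda>i k. t) k l = idm k l"
      "cm 1 (\<lambda>i k. t) G k l = H k l"
    using t h unfolding mm_def cm_def idm_def by (auto simp: algebra_simps)
qed

lemma diag_split: "diagm d = osum n (diagm d) (diagm (\<lambda>i. d (i + n)))"
  unfolding diagm_def osum_def by (auto simp: fun_eq_iff)

lemma hyp_split: "hyp_gram (Suc k) = osum (2 * k) (hyp_gram k) (hyp_gram 1)"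
proof -
  have "hyp_gram (Suc k) i j = osum (2 * k) (hyp_gram k) (hyp_gram 1) i j" for i j :: nat
    unfolding hyp_gram_def osum_def by (auto; presburger)
  then show ?thesis by (intro ext) simp
qed

lemma osum_assoc: "m \<le> n \<Longrightarrow> osum n (osum m A B) C = osum m A (osum (n - m) B C)"
  unfolding osum_def by (auto simp: fun_eq_iff)

lemma hyp0: "hyp_gram 0 i j = 0" unfolding hyp_gram_def by simp



abbreviation H1 :: "nat \<Rightarrow> nat \<Rightarrow> 'a::field" where "H1 \<equiv> hyp_gram 1"

definition d2 :: "'a \<Rightarrow> 'a \<Rightarrow> nat \<Rightarrow> nat \<Rightarrow> 'a::field" where
  "d2 u v = diagm (\<lambda>k. if k = 0 then u else v)"

lemma H1_vals: "H1 0 0 = 0" "H1 0 1 = 1" "H1 1 0 = 1" "H1 1 1 = 0"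
  unfolding hyp_gram_def by auto

lemma d2_vals: "d2 u v 0 0 = u" "d2 u v 1 1 = v" "d2 u v 0 1 = 0" "d2 u v 1 0 = 0"
  unfolding d2_def diagm_def by auto

lemma gram_iso2d':
  fixes p q r s :: "'a::field"
  assumes det: "p * s - q * r \<noteq> 0"
    and h00: "H 0 0 = p * p * u + r * r * v"
    and h01: "H 0 1 = p * q * u + r * s * v"
    and h10: "H 1 0 = p * q * u + r * s * v"
    and h11: "H 1 1 = q * q * u + s * s * v"
  shows "gram_iso 2 (d2 u v) H"
  unfolding d2_def by (rule gram_iso2d[OF det]) (use h00 h01 h10 h11 in simp_all)

context dlf begin

lemma pair_H:
  fixes u v s :: 'a
  assumes u: "u \<noteq> 0" and s: "s \<noteq> 0" and uv: "- (u * v) = s\<^sup>2"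
  shows "gram_iso 2 (d2 u v) H1"
proof -
  have "u * v = - s\<^sup>2" using uv by (metis minus_minus)
  then have v: "v = - s\<^sup>2 / u" using u by (simp add: field_simps)
  note tw = two_nz
  show ?thesis
  proof (rule gram_iso2d'[where p = 1 and q = "1 / (2 * u)" and r = "u / s" and s = "- 1 / (2 * s)"])
    show "1 * (- 1 / (2 * s)) - 1 / (2 * u) * (u / s) \<noteq> 0" using u s tw by (simp add: field_simps)
    show "H1 0 0 = 1 * 1 * u + u / s * (u / s) * v" unfolding v H1_vals using u s tw
      by (simp add: field_simps power2_eq_square)
    show "H1 0 1 = 1 * (1 / (2 * u)) * u + u / s * (- 1 / (2 * s)) * v" unfolding v H1_vals using u s tw
      by (simp add: field_simps power2_eq_square)
    show "H1 1 0 = 1 * (1 / (2 * u)) * u + u / s * (- 1 / (2 * s)) * v" unfolding v H1_vals using u s tw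
      by (simp add: field_simps power2_eq_square)
    show "H1 1 1 = 1 / (2 * u) * (1 / (2 * u)) * u + - 1 / (2 * s) * (- 1 / (2 * s)) * v"
      unfolding v H1_vals using u s tw by (simp add: field_simps power2_eq_square)
  qed
qed

end

context dlfD begin

abbreviation Dm :: "nat \<Rightarrow> nat \<Rightarrow> 'a" where "Dm \<equiv> diagm (\<lambda>k. if k = 0 then 1 else - \<Delta>)"

lemma Dm_d2: "Dm = d2 1 (- \<Delta>)" unfolding d2_def ..

lemma pair_D:
  fixes u v s :: 'a
  assumes u: "u \<noteq> 0" "ord u = 0" and s: "s \<noteq> 0" and uv: "- (u * v) = \<Delta> * s\<^sup>2"
  shows "gram_iso 2 (d2 u v) Dm"
proof -
  have "u * v = - (\<Delta> * s\<^sup>2)" using uv by (metis minus_minus)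
  then have v: "v = - \<Delta> * s\<^sup>2 / u" using u by (simp add: field_simps)
  have iu: "inverse u \<noteq> 0" "ord (inverse u) = 0" using u by (simp_all add: ord_inverse)
  obtain x y where xy: "x\<^sup>2 - \<Delta> * y\<^sup>2 = inverse u" using norm_surj[OF iu] by blast
  have Dn: "\<Delta> \<noteq> 0" using Delta_unit by simp
  have xy': "u * x\<^sup>2 - u * \<Delta> * y\<^sup>2 = 1" using xy u by (simp add: field_simps)
  show ?thesis unfolding Dm_d2
  proof (rule gram_iso2d'[where p = x and q = "\<Delta> * y" and r = "y * u / s" and s = "x * u / s"])
    have "x * (x * u / s) - \<Delta> * y * (y * u / s) = (u * x\<^sup>2 - u * \<Delta> * y\<^sup>2) / s"
      by (simp add: power2_eq_square algebra_simps diff_divide_distrib)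
    then show "x * (x * u / s) - \<Delta> * y * (y * u / s) \<noteq> 0" using xy' s by simp
    have "x * x * u + y * u / s * (y * u / s) * v = u * x\<^sup>2 - u * \<Delta> * y\<^sup>2"
      unfolding v using u s by (simp add: field_simps power2_eq_square)
    then show "d2 1 (- \<Delta>) 0 0 = x * x * u + y * u / s * (y * u / s) * v" using xy' d2_vals by simp
    have "x * (\<Delta> * y) * u + y * u / s * (x * u / s) * v = 0"
      unfolding v using u s by (simp add: field_simps power2_eq_square)
    then show "d2 1 (- \<Delta>) 0 1 = x * (\<Delta> * y) * u + y * u / s * (x * u / s) * v"
      "d2 1 (- \<Delta>) 1 0 = x * (\<Delta> * y) * u + y * u / s * (x * u / s) * v" using d2_vals by simp_all
    have "\<Delta> * y * (\<Delta> * y) * u + x * u / s * (x * u / s) * v = - \<Delta> * (u * x\<^sup>2 - u * \<Delta> * y\<^sup>2)"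
      unfolding v using u s by (simp add: field_simps power2_eq_square)
    then show "d2 1 (- \<Delta>) 1 1 = \<Delta> * y * (\<Delta> * y) * u + x * u / s * (x * u / s) * v"
      using xy' d2_vals by simp
  qed
qed

end


lemma lt4: "(k::nat) < 4 \<Longrightarrow> k = 0 \<or> k = 1 \<or> k = 2 \<or> k = 3" by arith
lemma lt3: "(k::nat) < 3 \<Longrightarrow> k = 0 \<or> k = 1 \<or> k = 2" by arith

lemma invol_bij: "(\<And>k. k < n \<Longrightarrow> \<sigma> k < n) \<Longrightarrow> (\<And>k. k < n \<Longrightarrow> \<sigma> (\<sigma> k) = k) \<Longrightarrow> bij_betw \<sigma> {..<n} {..<n}"
  by (rule bij_betw_byWitness[where f' = \<sigma>]) auto

lemma osum0: "osum 0 G H = H" unfolding osum_def by (simp add: fun_eq_iff)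

context dlfD begin

lemma D_to:
  assumes c: "c \<noteq> 0" "ord c = 0"
  shows "gram_iso 2 Dm (d2 (- c) (\<Delta> / c))"
proof -
  have mc: "- c \<noteq> 0" "ord (- c) = 0" using c by simp_all
  obtain x y where xy: "x\<^sup>2 - \<Delta> * y\<^sup>2 = - c" using norm_surj[OF mc] by blast
  show ?thesis unfolding Dm_d2
  proof (rule gram_iso2d'[where p = x and q = "\<Delta> * y / c" and r = y and s = "x / c"])
    have "x * (x / c) - \<Delta> * y / c * y = (x\<^sup>2 - \<Delta> * y\<^sup>2) / c"
      by (simp add: power2_eq_square algebra_simps diff_divide_distrib)
    then show "x * (x / c) - \<Delta> * y / c * y \<noteq> 0" using xy c by simp
    have "x * x * 1 + y * y * - \<Delta> = x\<^sup>2 - \<Delta> * y\<^sup>2" by (simp add: power2_eq_square)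
    then show "d2 (- c) (\<Delta> / c) 0 0 = x * x * 1 + y * y * - \<Delta>" using xy d2_vals by simp
    have z: "x * (\<Delta> * y / c) * 1 + y * (x / c) * - \<Delta> = 0" by (simp add: algebra_simps)
    show "d2 (- c) (\<Delta> / c) 0 1 = x * (\<Delta> * y / c) * 1 + y * (x / c) * - \<Delta>"
      by (subst d2_vals(3)) (rule z[symmetric])
    show "d2 (- c) (\<Delta> / c) 1 0 = x * (\<Delta> * y / c) * 1 + y * (x / c) * - \<Delta>"
      by (subst d2_vals(4)) (rule z[symmetric])
    have "\<Delta> * y / c * (\<Delta> * y / c) * 1 + x / c * (x / c) * - \<Delta> = - \<Delta> * (x\<^sup>2 - \<Delta> * y\<^sup>2) / (c * c)"
      using c by (simp add: field_simps power2_eq_square)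
    also have "\<dots> = - \<Delta> * (- c) / (c * c)" using xy by simp
    also have "\<dots> = \<Delta> / c" using c by (simp add: field_simps)
    finally show "d2 (- c) (\<Delta> / c) 1 1 = \<Delta> * y / c * (\<Delta> * y / c) * 1 + x / c * (x / c) * - \<Delta>"
      using d2_vals by simp
  qed
qed

lemma DD_HH: "gram_iso 4 (osum 2 Dm Dm) (hyp_gram 2)"
proof -
  have "gram_iso 2 Dm (d2 (-1) \<Delta>)" using D_to[of 1] by simp
  from gram_osum[OF gram_refl[of 2 Dm] this]
  have g1: "gram_iso 4 (osum 2 Dm Dm) (osum 2 Dm (d2 (-1) \<Delta>))" by simp
  have g2: "gram_iso 4 (osum 2 Dm (d2 (-1) \<Delta>)) (osum 2 (d2 1 (-1)) (d2 (- \<Delta>) \<Delta>))"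
  proof (rule gram_perm[where \<sigma> = "\<lambda>k::nat. if k = 1 then 2 else if k = 2 then 1 else k"])
    show "bij_betw (\<lambda>k::nat. if k = 1 then 2 else if k = 2 then 1 else k) {..<4} {..<4}"
      by (rule invol_bij) auto
    fix k l :: nat assume "k < 4" "l < 4"
    then show "osum 2 (d2 1 (- 1)) (d2 (- \<Delta>) \<Delta>) k l =
       osum 2 Dm (d2 (- 1) \<Delta>) (if k = 1 then 2 else if k = 2 then 1 else k) (if l = 1 then 2 else if l = 2 then 1 else l)"
      using lt4[of k] lt4[of l] unfolding osum_def d2_def diagm_def by auto
  qed
  have Dn: "\<Delta> \<noteq> 0" using Delta_unit by simp
  have g3: "gram_iso 4 (osum 2 (d2 1 (-1)) (d2 (- \<Delta>) \<Delta>)) (osum 2 H1 H1)"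
    using gram_osum[OF pair_H[of 1 1 "-1"] pair_H[of "- \<Delta>" \<Delta> \<Delta>]] Dn by (simp add: power2_eq_square)
  have "hyp_gram 2 = osum 2 H1 (H1 :: nat \<Rightarrow> nat \<Rightarrow> 'a)" using hyp_split[of 1] by (simp add: numeral_2_eq_2)
  then show ?thesis using gram_trans[OF gram_trans[OF g1 g2] g3] by simp
qed

lemma DH_HD: "gram_iso 4 (osum 2 Dm H1) (osum 2 H1 Dm)"
proof (rule gram_perm[where \<sigma> = "\<lambda>k. if k < 2 then k + 2 else k - 2"])
  show "bij_betw (\<lambda>k::nat. if k < 2 then k + 2 else k - 2) {..<4} {..<4}"
    by (rule invol_bij) auto
  fix k l :: nat assume "k < 4" "l < 4"
  then show "osum 2 H1 Dm k l = osum 2 Dm H1 (if k < 2 then k + 2 else k - 2) (if l < 2 then l + 2 else l - 2)"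
    using lt4[of k] lt4[of l] unfolding osum_def hyp_gram_def diagm_def by auto
qed

lemma Dc:
  assumes c: "c \<noteq> 0" "ord c = 0"
  shows "gram_iso 3 (osum 2 Dm (diagm (\<lambda>k. c))) (osum 2 H1 (diagm (\<lambda>k. \<Delta> / c)))"
proof -
  have g1: "gram_iso 3 (osum 2 Dm (diagm (\<lambda>k. c))) (osum 2 (d2 (- c) (\<Delta> / c)) (diagm (\<lambda>k. c)))"
    using gram_osum[OF D_to[OF c] gram_refl[of 1 "diagm (\<lambda>k. c)"]] by simp
  have g2: "gram_iso 3 (osum 2 (d2 (- c) (\<Delta> / c)) (diagm (\<lambda>k. c))) (osum 2 (d2 (- c) c) (diagm (\<lambda>k. \<Delta> / c)))"
  proof (rule gram_perm[where \<sigma> = "\<lambda>k::nat. if k = 1 then 2 else if k = 2 then 1 else k"])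
    show "bij_betw (\<lambda>k::nat. if k = 1 then 2 else if k = 2 then 1 else k) {..<3} {..<3}"
      by (rule invol_bij) auto
    fix k l :: nat assume "k < 3" "l < 3"
    then show "osum 2 (d2 (- c) c) (diagm (\<lambda>k. \<Delta> / c)) k l =
       osum 2 (d2 (- c) (\<Delta> / c)) (diagm (\<lambda>k. c)) (if k = 1 then 2 else if k = 2 then 1 else k) (if l = 1 then 2 else if l = 2 then 1 else l)"
      using lt3[of k] lt3[of l] unfolding osum_def d2_def diagm_def by auto
  qed
  have g3: "gram_iso 3 (osum 2 (d2 (- c) c) (diagm (\<lambda>k. \<Delta> / c))) (osum 2 H1 (diagm (\<lambda>k. \<Delta> / c)))"
    using gram_osum[OF pair_H[of "- c" c c] gram_refl[of 1 "diagm (\<lambda>k. \<Delta> / c)"]] c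
    by (simp add: power2_eq_square)
  show ?thesis using gram_trans[OF gram_trans[OF g1 g2] g3] .
qed

end


lemma pair_restrict:
  assumes "gram_iso 2 (d2 (a (n + 1)) (a (n + 2))) X"
  shows "gram_iso 2 (diagm (\<lambda>i. a (i + n + 1))) X"
proof (rule gram_cong[OF assms])
  fix i j :: nat assume "i < 2" "j < 2"
  then show "d2 (a (n + 1)) (a (n + 2)) i j = diagm (\<lambda>i. a (i + n + 1)) i j"
    using lt2[of i] lt2[of j] unfolding d2_def diagm_def by auto
qed simp

context dlfD begin

lemma iv_asm:
  fixes a :: "nat \<Rightarrow> 'a"
  assumes P: "\<forall>t. 1 \<le> t \<and> t \<le> Suc k \<longrightarrow> gram_iso 2 (d2 (a (2*t-1)) (a (2*t))) H1 \<or> gram_iso 2 (d2 (a (2*t-1)) (a (2*t))) Dm"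
  shows "gram_iso (2 * Suc k) (diagm (\<lambda>i. a (i + 1))) (hyp_gram (Suc k)) \<or>
         gram_iso (2 * Suc k) (diagm (\<lambda>i. a (i + 1))) (osum (2 * k) (hyp_gram k) Dm)"
  using P
proof (induction k)
  case 0
  have h: "1 \<le> (1::nat) \<and> (1::nat) \<le> Suc 0" by simp
  from "0"[rule_format, OF h]
  have "gram_iso 2 (d2 (a 1) (a 2)) H1 \<or> gram_iso 2 (d2 (a 1) (a 2)) Dm"
    by simp
  moreover have "gram_iso 2 (diagm (\<lambda>i. a (i + 1))) X" if "gram_iso 2 (d2 (a 1) (a 2)) X" for X
  proof (rule gram_cong[OF that])
    fix i j :: nat assume "i < 2" "j < 2"
    then show "d2 (a 1) (a 2) i j = diagm (\<lambda>i. a (i + 1)) i j"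
      using lt2[of i] lt2[of j] unfolding d2_def diagm_def by (auto simp: numeral_2_eq_2)
  qed simp
  ultimately have "gram_iso 2 (diagm (\<lambda>i. a (i + 1))) H1 \<or> gram_iso 2 (diagm (\<lambda>i. a (i + 1))) Dm"
    by blast
  then show ?case by (simp add: osum0)
next
  case (Suc k)
  define n where "n = 2 * Suc k"
  have IH: "gram_iso n (diagm (\<lambda>i. a (i + 1))) (hyp_gram (Suc k)) \<or>
         gram_iso n (diagm (\<lambda>i. a (i + 1))) (osum (2 * k) (hyp_gram k) Dm)"
    using Suc unfolding n_def by auto
  have "gram_iso 2 (d2 (a (2 * Suc (Suc k) - 1)) (a (2 * Suc (Suc k)))) H1 \<or>
        gram_iso 2 (d2 (a (2 * Suc (Suc k) - 1)) (a (2 * Suc (Suc k)))) Dm"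
    using Suc.prems by auto
  moreover have "2 * Suc (Suc k) - 1 = n + 1" "2 * Suc (Suc k) = n + 2" unfolding n_def by simp_all
  ultimately have Y: "gram_iso 2 (diagm (\<lambda>i. a (i + n + 1))) H1 \<or> gram_iso 2 (diagm (\<lambda>i. a (i + n + 1))) Dm"
    using pair_restrict by auto
  have ds: "diagm (\<lambda>i. a (i + 1)) = osum n (diagm (\<lambda>i. a (i + 1))) (diagm (\<lambda>i. a (i + n + 1)))"
    using diag_split[of "\<lambda>i. a (i + 1)" n] by (simp add: add.assoc)
  have nn: "2 * Suc (Suc k) = n + 2" unfolding n_def by simp
  have blk: "gram_iso (2 * Suc (Suc k)) (diagm (\<lambda>i. a (i + 1))) (osum n X Y')"
    if "gram_iso n (diagm (\<lambda>i. a (i + 1))) X" "gram_iso 2 (diagm (\<lambda>i. a (i + n + 1))) Y'" for X Y'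
    unfolding nn using gram_osum[OF that] ds by simp
  have hs: "hyp_gram (Suc (Suc k)) = osum n (hyp_gram (Suc k)) (H1 :: nat \<Rightarrow> nat \<Rightarrow> 'a)" unfolding n_def by (rule hyp_split)
  have hs2: "hyp_gram (Suc k) = osum (2 * k) (hyp_gram k) (H1 :: nat \<Rightarrow> nat \<Rightarrow> 'a)" by (rule hyp_split)
  have le: "2 * k \<le> n" and nm: "n - 2 * k = 2" unfolding n_def by simp_all
  have "2 * Suc k = 2 * k + 2" by simp
  show ?case
  proof (cases "gram_iso n (diagm (\<lambda>i. a (i + 1))) (hyp_gram (Suc k))")
    case True
    show ?thesis
    proof (cases "gram_iso 2 (diagm (\<lambda>i. a (i + n + 1))) H1")
      case True2: True
      have "gram_iso (2 * Suc (Suc k)) (diagm (\<lambda>i. a (i + 1))) (osum n (hyp_gram (Suc k)) H1)"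
        using blk[OF True True2] .
      then show ?thesis unfolding hs[symmetric] by blast
    next
      case False
      then have "gram_iso 2 (diagm (\<lambda>i. a (i + n + 1))) Dm" using Y by blast
      then show ?thesis using blk[OF True] unfolding n_def by simp
    qed
  next
    case False
    then have X: "gram_iso n (diagm (\<lambda>i. a (i + 1))) (osum (2 * k) (hyp_gram k) Dm)" using IH by blast
    have as: "osum n (osum (2 * k) (hyp_gram k) Dm) Z = osum (2 * k) (hyp_gram k) (osum 2 Dm Z)" for Z :: "nat \<Rightarrow> nat \<Rightarrow> 'a"
      using osum_assoc[OF le] nm by simp
    have dim: "2 * Suc (Suc k) = 2 * k + 4" by simp
    show ?thesis
    proof (cases "gram_iso 2 (diagm (\<lambda>i. a (i + n + 1))) H1")
      case True
      have g1: "gram_iso (2 * Suc (Suc k)) (diagm (\<lambda>i. a (i + 1))) (osum (2 * k) (hyp_gram k) (osum 2 Dm H1))"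
        using blk[OF X True] as by simp
      have g2: "gram_iso (2 * Suc (Suc k)) (osum (2 * k) (hyp_gram k) (osum 2 Dm H1)) (osum (2 * k) (hyp_gram k) (osum 2 H1 Dm))"
        unfolding dim by (rule gram_osum[OF gram_refl DH_HD])
      have "osum (2 * k) (hyp_gram k) (osum 2 H1 Dm) = osum n (osum (2 * k) (hyp_gram k) H1) Dm"
        by (subst osum_assoc[OF le]) (simp add: nm)
      also have "\<dots> = osum n (hyp_gram (Suc k)) Dm" using hs2 by simp
      finally show ?thesis using gram_trans[OF g1 g2] unfolding n_def by simp
    next
      case False
      then have "gram_iso 2 (diagm (\<lambda>i. a (i + n + 1))) Dm" using Y by blast
      then have g1: "gram_iso (2 * Suc (Suc k)) (diagm (\<lambda>i. a (i + 1))) (osum (2 * k) (hyp_gram k) (osum 2 Dm Dm))"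
        using blk[OF X] as by simp
      have g2: "gram_iso (2 * Suc (Suc k)) (osum (2 * k) (hyp_gram k) (osum 2 Dm Dm)) (osum (2 * k) (hyp_gram k) (hyp_gram 2))"
        unfolding dim by (rule gram_osum[OF gram_refl DD_HH])
      have "hyp_gram 2 = osum 2 H1 (H1 :: nat \<Rightarrow> nat \<Rightarrow> 'a)" using hyp_split[of 1] by (simp add: numeral_2_eq_2)
      then have "osum (2 * k) (hyp_gram k) (hyp_gram 2) = osum n (osum (2 * k) (hyp_gram k) H1) (H1 :: nat \<Rightarrow> nat \<Rightarrow> 'a)"
        by (subst osum_assoc[OF le]) (simp add: nm)
      also have "\<dots> = hyp_gram (Suc (Suc k))" using hs hs2 by simp
      finally show ?thesis using gram_trans[OF g1 g2] by simp
    qed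
  qed
qed

lemma v_asm:
  fixes a :: "nat \<Rightarrow> 'a"
  assumes X: "gram_iso (2 * Suc k) (diagm (\<lambda>i. a (i + 1))) (hyp_gram (Suc k)) \<or>
         gram_iso (2 * Suc k) (diagm (\<lambda>i. a (i + 1))) (osum (2 * k) (hyp_gram k) Dm)"
    and t: "t \<noteq> 0" and c: "a (2 * Suc k + 1) * t\<^sup>2 \<noteq> 0" "ord (a (2 * Suc k + 1) * t\<^sup>2) = 0"
  shows "\<exists>\<epsilon>. \<epsilon> \<noteq> 0 \<and> ord \<epsilon> = 0 \<and> (\<exists>t. t \<noteq> 0 \<and> (\<epsilon> = a (2 * Suc k + 1) * t\<^sup>2 \<or> \<epsilon> = \<Delta> * a (2 * Suc k + 1) * t\<^sup>2)) \<and>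
     gram_iso (2 * Suc k + 1) (diagm (\<lambda>i. a (i + 1))) (osum (2 * Suc k) (hyp_gram (Suc k)) (diagm (\<lambda>i. \<epsilon>)))"
proof -
  define n where "n = 2 * Suc k"
  define cc where "cc = a (n + 1) * t\<^sup>2"
  have cc: "cc \<noteq> 0" "ord cc = 0" using c unfolding cc_def n_def by auto
  have ds: "diagm (\<lambda>i. a (i + 1)) = osum n (diagm (\<lambda>i. a (i + 1))) (diagm (\<lambda>i. a (i + n + 1)))"
    using diag_split[of "\<lambda>i. a (i + 1)" n] by (simp add: add.assoc)
  have g1: "gram_iso 1 (diagm (\<lambda>i. a (i + n + 1))) (diagm (\<lambda>i. cc))"
    by (rule gram_iso1[OF t]) (simp add: diagm_def cc_def power2_eq_square)
  have blk: "gram_iso (n + 1) (diagm (\<lambda>i. a (i + 1))) (osum n Z (diagm (\<lambda>i. cc)))"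
    if "gram_iso n (diagm (\<lambda>i. a (i + 1))) Z" for Z
    using gram_osum[OF that g1] ds by simp
  have le: "2 * k \<le> n" and nm: "n - 2 * k = 2" unfolding n_def by simp_all
  show ?thesis
  proof (cases "gram_iso n (diagm (\<lambda>i. a (i + 1))) (hyp_gram (Suc k))")
    case True
    then show ?thesis using blk[OF True] cc t unfolding cc_def n_def by blast
  next
    case False
    then have Xd: "gram_iso n (diagm (\<lambda>i. a (i + 1))) (osum (2 * k) (hyp_gram k) Dm)" using X unfolding n_def by blast
    have "osum n (osum (2 * k) (hyp_gram k) Dm) (diagm (\<lambda>i. cc)) = osum (2 * k) (hyp_gram k) (osum 2 Dm (diagm (\<lambda>i. cc)))"
      using osum_assoc[OF le] nm by simp
    then have g1: "gram_iso (n + 1) (diagm (\<lambda>i. a (i + 1))) (osum (2 * k) (hyp_gram k) (osum 2 Dm (diagm (\<lambda>i. cc))))"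
      using blk[OF Xd] by simp
    have dim: "n + 1 = 2 * k + 3" unfolding n_def by simp
    have g2: "gram_iso (n + 1) (osum (2 * k) (hyp_gram k) (osum 2 Dm (diagm (\<lambda>i. cc))))
         (osum (2 * k) (hyp_gram k) (osum 2 H1 (diagm (\<lambda>i. \<Delta> / cc))))"
      unfolding dim by (rule gram_osum[OF gram_refl Dc[OF cc]])
    have "osum (2 * k) (hyp_gram k) (osum 2 H1 (diagm (\<lambda>i. \<Delta> / cc))) = osum n (osum (2 * k) (hyp_gram k) H1) (diagm (\<lambda>i. \<Delta> / cc))"
      by (subst osum_assoc[OF le]) (simp add: nm)
    also have "\<dots> = osum n (hyp_gram (Suc k)) (diagm (\<lambda>i. \<Delta> / cc))"
    proof -
      have "hyp_gram (Suc k) = osum (2 * k) (hyp_gram k) (H1 :: nat \<Rightarrow> nat \<Rightarrow> 'a)" by (rule hyp_split)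
      then show ?thesis by simp
    qed
    finally have g: "gram_iso (n + 1) (diagm (\<lambda>i. a (i + 1))) (osum n (hyp_gram (Suc k)) (diagm (\<lambda>i. \<Delta> / cc)))"
      using gram_trans[OF g1 g2] by simp
    have Du: "\<Delta> \<noteq> 0" "ord \<Delta> = 0" using Delta_unit by auto
    have e1: "\<Delta> / cc \<noteq> 0" "ord (\<Delta> / cc) = 0" using Du cc by (simp_all add: ord_divide)
    have "\<Delta> / cc = \<Delta> * a (n + 1) * (t / cc)\<^sup>2" using cc unfolding cc_def by (simp add: field_simps power2_eq_square)
    moreover have "t / cc \<noteq> 0" using t cc by simp
    ultimately show ?thesis using g e1 unfolding n_def by blast
  qed
qed

end


definition addclosed :: "'v::ab_group_add set \<Rightarrow> bool" where
  "addclosed N \<longleftrightarrow> (\<forall>x\<in>N. \<forall>y\<in>N. x + y \<in> N)"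

lemma Ospan_addclosed: "addclosed (Ospan ord scale G)"
  unfolding addclosed_def
proof (intro ballI)
  fix x y assume xx: "x \<in> Ospan ord scale G" and yy: "y \<in> Ospan ord scale G"
  from xx obtain n1 c1 v1 where x: "x = (\<Sum>k<(n1::nat). scale (c1 k) (v1 k))" "\<forall>k<n1. c1 k \<in> val_ring ord \<and> v1 k \<in> G"
    unfolding Ospan_def by blast
  from yy obtain n2 c2 v2 where y: "y = (\<Sum>k<(n2::nat). scale (c2 k) (v2 k))" "\<forall>k<n2. c2 k \<in> val_ring ord \<and> v2 k \<in> G"
    unfolding Ospan_def by blast
  define c where "c k = (if k < n1 then c1 k else c2 (k - n1))" for k
  define v where "v k = (if k < n1 then v1 k else v2 (k - n1))" for k
  have "(\<Sum>k<n1+n2. scale (c k) (v k)) = (\<Sum>k<n1. scale (c k) (v k)) + (\<Sum>k<n2. scale (c (k + n1)) (v (k + n1)))"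
    by (rule sum_split)
  also have "\<dots> = x + y" unfolding x y c_def v_def by simp
  finally have "x + y = (\<Sum>k<n1+n2. scale (c k) (v k))" by simp
  moreover have "\<forall>k<n1+n2. c k \<in> val_ring ord \<and> v k \<in> G" using x(2) y(2) unfolding c_def v_def by auto
  ultimately show "x + y \<in> Ospan ord scale G" unfolding Ospan_def by blast
qed

locale qspace =
  fixes scale :: "'a::field \<Rightarrow> 'v::ab_group_add \<Rightarrow> 'v" and B :: "'v \<Rightarrow> 'v \<Rightarrow> 'a"
  assumes VS: "vector_space scale" and SB: "sym_bilinear scale B"
begin

lemma Bsym: "B u v = B v u" using SB unfolding sym_bilinear_def by blast
lemma Badd: "B (u + v) w = B u w + B v w" using SB unfolding sym_bilinear_def by blast
lemma Bscale: "B (scale c u) w = c * B u w" using SB unfolding sym_bilinear_def by blast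
lemma Bdiff: "B (u - v) w = B u w - B v w"
  using Badd[of "u - v" v w] by (simp add: algebra_simps)
lemma scale_ldist: "scale (a + b) x = scale a x + scale b x"
  using VS unfolding vector_space_def by blast

lemma proj_add: "B x x \<noteq> 0 \<Longrightarrow> proj scale B x (u + v) = proj scale B x u + proj scale B x v"
  unfolding proj_def Badd add_divide_distrib scale_ldist by (simp add: algebra_simps)

lemma proj_addclosed: "B x x \<noteq> 0 \<Longrightarrow> addclosed N \<Longrightarrow> addclosed (proj scale B x ` N)"
  unfolding addclosed_def
proof (intro ballI)
  fix p q assume q: "B x x \<noteq> 0" and N: "\<forall>x\<in>N. \<forall>y\<in>N. x + y \<in> N"
    and p: "p \<in> proj scale B x ` N" and qq: "q \<in> proj scale B x ` N"
  obtain u w where "u \<in> N" "w \<in> N" "p = proj scale B x u" "q = proj scale B x w" using p qq by blast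
  then have "p + q = proj scale B x (u + w)" "u + w \<in> N" using proj_add[OF q] N by auto
  then show "p + q \<in> proj scale B x ` N" by blast
qed

lemma Q_proj: "B x x \<noteq> 0 \<Longrightarrow> B (proj scale B x v) (proj scale B x v) = B v v - (B v x)\<^sup>2 / B x x"
proof -
  assume q: "B x x \<noteq> 0"
  define s where "s = B v x / B x x"
  have "B (v - scale s x) (v - scale s x) = B v v - s * B x v - s * (B v x - s * B x x)"
    unfolding Bdiff Bscale using Bsym[of v "v - scale s x"] Bsym[of x "v - scale s x"]
    by (simp add: Bdiff Bscale)
  also have "\<dots> = B v v - (B v x)\<^sup>2 / B x x" unfolding s_def using q Bsym[of x v]
    by (simp add: field_simps power2_eq_square)
  finally show ?thesis unfolding proj_def s_def .
qed

lemma Q_add: "B (x + v) (x + v) = B x x + 2 * B v x + B v v"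
  unfolding Badd using Bsym[of x "x + v"] Bsym[of v "x + v"] Bsym[of x v] by (simp add: Badd)

lemma in_norm_ideal: "1 \<in> val_ring ord \<Longrightarrow> v \<in> N \<Longrightarrow> B v v \<in> norm_ideal ord B N"
  unfolding norm_ideal_def
  by (rule CollectI, rule exI[of _ 1], rule exI[of _ "\<lambda>_. 1"], rule exI[of _ "\<lambda>_. v"]) simp

lemma BONG_tail: "is_BONG ord scale B (x # xs) N \<Longrightarrow> is_BONG ord scale B xs (proj scale B x ` N)" by simp

lemma BONG_drop:
  "is_BONG ord scale B xs M \<Longrightarrow> addclosed M \<Longrightarrow> k \<le> length xs \<Longrightarrow>
   \<exists>N. is_BONG ord scale B (drop k xs) N \<and> addclosed N"
proof (induction k arbitrary: xs M)
  case 0 then show ?case by auto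
next
  case (Suc k)
  then obtain x ys where xs: "xs = x # ys" by (cases xs) auto
  then have "is_BONG ord scale B ys (proj scale B x ` M)" "B x x \<noteq> 0" using Suc.prems by auto
  moreover have "addclosed (proj scale B x ` M)" using proj_addclosed Suc.prems calculation(2) by blast
  ultimately show ?case using Suc.IH[of ys "proj scale B x ` M"] Suc.prems xs by auto
qed

end

context dlf begin

lemma pair_facts:
  assumes Q: "qspace scale B" and bg: "is_BONG ord scale B (x # y # rest) N" and ac: "addclosed N"
  shows "B x x \<noteq> 0 \<and> B y y \<noteq> 0 \<and> vge ord (B y y / B x x) (- 2 * ord 2) \<and>
    (\<exists>\<beta>. vge ord ((- (B x x * B y y) - \<beta>\<^sup>2) / (- (B x x * B y y))) (ord (B x x) - ord (B y y)))"
proof -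
  interpret qspace scale B by (rule Q)
  let ?a = "B x x" and ?b = "B y y"
  have a: "?a \<noteq> 0" and nx: "principal ord ?a = norm_ideal ord B N" and xN: "x \<in> N"
    and b: "?b \<noteq> 0" and yN: "y \<in> proj scale B x ` N" using bg by auto
  obtain v where v: "v \<in> N" "y = proj scale B x v" using yN by blast
  have inN: "vge ord (B w w / ?a) 0" if "w \<in> N" for w
  proof -
    have "1 \<in> val_ring ord" by (simp add: val_ring_iff vge_one)
    then have "B w w \<in> norm_ideal ord B N" using in_norm_ideal[of ord w N] that by blast
    then show ?thesis using nx principal_iff[OF a] by simp
  qed
  have qv: "vge ord (B v v / ?a) 0" using inN v(1) .
  have qxv: "vge ord (B (x + v) (x + v) / ?a) 0" using inN ac xN v(1) unfolding addclosed_def by blast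
  have eq: "2 * (B v x / ?a) = B (x + v) (x + v) / ?a - 1 - B v v / ?a"
    unfolding Q_add using a by (simp add: field_simps)
  have "vge ord (B (x + v) (x + v) / ?a - 1 - B v v / ?a) 0"
    by (rule vge_diff[OF vge_diff[OF qxv] qv]) (simp add: vge_one)
  then have tb: "vge ord (2 * (B v x / ?a)) 0" unfolding eq .
  have "vge ord ((B v x / ?a) * 2) 0" using tb by (simp only: mult.commute)
  then have be: "vge ord (B v x / ?a) (- ord 2)"
    using vge_mult_iff[OF two_nz, of "B v x / ?a" 0] by simp
  have qy: "?b = B v v - (B v x)\<^sup>2 / ?a" using Q_proj[OF a] v(2) by simp
  have "?b / ?a = B v v / ?a - (B v x / ?a)\<^sup>2" unfolding qy using a by (simp add: field_simps power2_eq_square)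
  moreover have "vge ord ((B v x / ?a)\<^sup>2) (2 * (- ord 2))" using be vge_sq_iff by blast
  ultimately have r1: "vge ord (?b / ?a) (- 2 * ord 2)"
    using vge_diff[OF vge_mono[OF qv, of "- 2 * ord 2"]] e_pos by simp
  have c: "- (?a * ?b) - (B v x)\<^sup>2 = - (?a * B v v)" unfolding qy using a by (simp add: field_simps)
  have "(- (?a * ?b) - (B v x)\<^sup>2) / (- (?a * ?b)) = (- (?a * B v v)) / (- (?a * ?b))"
    unfolding c ..
  also have "\<dots> = (B v v / ?a) * (?a / ?b)" using a b by (simp add: divide_simps)
  finally have "(- (?a * ?b) - (B v x)\<^sup>2) / (- (?a * ?b)) = (B v v / ?a) * (?a / ?b)" .
  moreover have "vge ord (?a / ?b) (ord ?a - ord ?b)" using a b by (simp add: vge_def ord_divide)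
  then have "vge ord ((B v v / ?a) * (?a / ?b)) (0 + (ord ?a - ord ?b))" by (rule vge_mult[OF qv])
  ultimately have "vge ord ((- (?a * ?b) - (B v x)\<^sup>2) / (- (?a * ?b))) (0 + (ord ?a - ord ?b))"
    by (simp only:)
  then show ?thesis using a b r1 by auto
qed

end


context dlf begin

lemma seq_facts:
  assumes Q: "qspace scale B" and bg: "is_BONG ord scale B xs M" and ac: "addclosed M"
    and len: "length xs = m"
    and ad: "\<forall>i. 1 \<le> i \<and> i \<le> m \<longrightarrow> a i = B (xs ! (i - 1)) (xs ! (i - 1))"
  shows "\<forall>i. 1 \<le> i \<and> i + 1 \<le> m \<longrightarrow> a i \<noteq> 0 \<and> a (i + 1) \<noteq> 0 \<and>
            vge ord (a (i + 1) / a i) (- 2 * ord 2) \<and>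
            (\<exists>\<beta>. vge ord ((- (a i * a (i + 1)) - \<beta>\<^sup>2) / (- (a i * a (i + 1)))) (ord (a i) - ord (a (i + 1))))"
proof (intro allI impI)
  fix i assume i: "1 \<le> i \<and> i + 1 \<le> m"
  interpret qspace scale B by (rule Q)
  have "i - 1 \<le> length xs" using i len by linarith
  from BONG_drop[OF bg ac this] obtain N where N: "is_BONG ord scale B (drop (i - 1) xs) N" "addclosed N"
    by blast
  have l1: "i - 1 < length xs" "i < length xs" using i len by linarith+
  have si: "Suc (i - 1) = i" using i by linarith
  have "drop (i - 1) xs = xs ! (i - 1) # drop i xs" using Cons_nth_drop_Suc[OF l1(1)] si by simp
  moreover have "drop i xs = xs ! i # drop (i + 1) xs" using Cons_nth_drop_Suc[OF l1(2)] by simp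
  ultimately have d: "drop (i - 1) xs = xs ! (i - 1) # xs ! i # drop (i + 1) xs" by simp
  have "a i = B (xs ! (i - 1)) (xs ! (i - 1))" "a (i + 1) = B (xs ! i) (xs ! i)" using ad i by auto
  then show "a i \<noteq> 0 \<and> a (i + 1) \<noteq> 0 \<and>
            vge ord (a (i + 1) / a i) (- 2 * ord 2) \<and>
            (\<exists>\<beta>. vge ord ((- (a i * a (i + 1)) - \<beta>\<^sup>2) / (- (a i * a (i + 1)))) (ord (a i) - ord (a (i + 1))))"
    using pair_facts[OF Q, of "xs ! (i - 1)" "xs ! i" "drop (i + 1) xs" N] N d by simp
qed

lemma first_fact:
  assumes bg: "is_BONG ord scale B xs M" and len: "length xs = m" and m: "1 \<le> m"
    and ad: "\<forall>i. 1 \<le> i \<and> i \<le> m \<longrightarrow> a i = B (xs ! (i - 1)) (xs ! (i - 1))"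
    and integral: "\<forall>v\<in>M. B v v \<in> val_ring ord"
  shows "a 1 \<noteq> 0 \<and> 0 \<le> ord (a 1)"
proof -
  obtain x rest where xs: "xs = x # rest" using len m by (cases xs) auto
  then have "x \<in> M" "B x x \<noteq> 0" using bg by auto
  moreover have "a 1 = B x x" using ad m xs by simp
  ultimately show ?thesis using integral by (auto simp: val_ring_iff vge_def)
qed

lemma parity_from:
  assumes c: "c \<noteq> 0" and h: "vge ord ((c - \<beta>\<^sup>2) / c) K" and K: "1 \<le> K"
  shows "even (ord c)"
proof -
  define s where "s = (c - \<beta>\<^sup>2) / c"
  have s1: "vge ord s 1" using h K vge_mono unfolding s_def by blast
  have "\<beta>\<^sup>2 = c * (1 - s)" unfolding s_def using c by (simp add: field_simps)
  moreover have "1 - s \<noteq> 0" "ord (1 - s) = 0" using unit_minus[OF s1] by auto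
  ultimately have "\<beta>\<^sup>2 \<noteq> 0" "ord (\<beta>\<^sup>2) = ord c" using c by (auto simp: ord_mult)
  then have "ord c = 2 * ord \<beta>" by (simp add: ord_sq)
  then show ?thesis by simp
qed

definition goodc :: "'a \<Rightarrow> bool" where
  "goodc c \<longleftrightarrow> c \<noteq> 0 \<and> (\<exists>\<beta>. vge ord ((c - \<beta>\<^sup>2) / c) (2 * ord 2))"

lemma goodc_mult: "goodc c1 \<Longrightarrow> goodc c2 \<Longrightarrow> goodc (c1 * c2)"
proof -
  assume g1: "goodc c1" and g2: "goodc c2"
  then obtain b1 b2 where c: "c1 \<noteq> 0" "c2 \<noteq> 0" and h1: "vge ord ((c1 - b1\<^sup>2) / c1) (2 * ord 2)"
    and h2: "vge ord ((c2 - b2\<^sup>2) / c2) (2 * ord 2)" unfolding goodc_def by blast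
  define s1 where "s1 = (c1 - b1\<^sup>2) / c1"
  define s2 where "s2 = (c2 - b2\<^sup>2) / c2"
  have e1: "b1\<^sup>2 = c1 * (1 - s1)" unfolding s1_def using c by (simp add: field_simps)
  have e2: "b2\<^sup>2 = c2 * (1 - s2)" unfolding s2_def using c by (simp add: field_simps)
  have "(c1 * c2 - (b1 * b2)\<^sup>2) / (c1 * c2) = (c1 * c2 - c1 * (1 - s1) * (c2 * (1 - s2))) / (c1 * c2)"
    by (simp add: power_mult_distrib e1 e2)
  also have "\<dots> = s1 + s2 - s1 * s2" using c by (simp add: field_simps)
  finally have "(c1 * c2 - (b1 * b2)\<^sup>2) / (c1 * c2) = s1 + s2 - s1 * s2" .
  moreover have "vge ord (s1 * s2) (2 * ord 2)"
    using vge_mult[of s1 "2 * ord 2" s2 "2 * ord 2"] h1 h2 e_pos vge_mono unfolding s1_def s2_def by fastforce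
  ultimately have "vge ord ((c1 * c2 - (b1 * b2)\<^sup>2) / (c1 * c2)) (2 * ord 2)"
    using vge_diff[OF vge_add] h1 h2 unfolding s1_def s2_def by simp
  then show ?thesis unfolding goodc_def using c by auto
qed

lemma exists_ord: "\<exists>t. t \<noteq> 0 \<and> ord t = n"
proof -
  obtain p where p: "p \<noteq> 0" "ord p = 1"
    apply (insert F[unfolded dyadic_local_field_def]) apply (elim conjE exE) by blast
  show ?thesis
  proof (cases "0 \<le> n")
    case True
    then show ?thesis using p by (intro exI[of _ "p ^ nat n"]) (simp add: ord_power)
  next
    case False
    then show ?thesis using p by (intro exI[of _ "inverse p ^ nat (- n)"]) (simp add: ord_power ord_inverse)
  qed
qed

end

context dlfD begin

lemma sqclass_from:
  assumes c: "c \<noteq> 0" and h: "vge ord ((c - \<beta>\<^sup>2) / c) (2 * ord 2)"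
  shows "\<exists>t. t \<noteq> 0 \<and> (c = t\<^sup>2 \<or> c = \<Delta> * t\<^sup>2)"
proof -
  define s where "s = (c - \<beta>\<^sup>2) / c"
  have s2: "vge ord s (2 * ord 2)" using h unfolding s_def .
  have s1: "vge ord s 1" using s2 e_pos vge_mono by fastforce
  have u: "1 - s \<noteq> 0" "ord (1 - s) = 0" using unit_minus[OF s1] by auto
  have b2: "\<beta>\<^sup>2 = c * (1 - s)" unfolding s_def using c by (simp add: field_simps)
  then have bn: "\<beta> \<noteq> 0" using c u by auto
  define w where "w = s / (4 * (1 - s))"
  have "vge ord w (2 * ord 2 - ord (4 * (1 - s)))" unfolding w_def using s2 u four_nz
    by (simp add: vge_divide_iff)
  moreover have "ord (4 * (1 - s)) = ord 4 + ord (1 - s)" using ord_mult four_nz u by blast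
  then have "ord (4 * (1 - s)) = 2 * ord 2" using u ord_4 by simp
  moreover
  ultimately have wO: "w \<in> Ov" by simp
  have cw: "c = \<beta>\<^sup>2 * (1 + 4 * w)" unfolding w_def b2 using u four_nz by (simp add: field_simps)
  obtain t where t: "t \<noteq> 0" "1 + 4 * w = t\<^sup>2 \<or> 1 + 4 * w = \<Delta> * t\<^sup>2" using sq_class[OF wO] by blast
  show ?thesis
  proof (cases "1 + 4 * w = t\<^sup>2")
    case True
    then have "c = (\<beta> * t)\<^sup>2" using cw by (simp add: power_mult_distrib)
    then show ?thesis using bn t by (intro exI[of _ "\<beta> * t"]) simp
  next
    case False
    then have "c = \<Delta> * (\<beta> * t)\<^sup>2" using cw t by (simp add: power_mult_distrib)
    then show ?thesis using bn t by (intro exI[of _ "\<beta> * t"]) simp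
  qed
qed

end


lemma ereal_add_ge: "ereal z \<le> d \<Longrightarrow> t \<le> x + z \<Longrightarrow> ereal t \<le> ereal x + d"
proof -
  assume "ereal z \<le> d" "t \<le> x + z"
  have "ereal x + ereal z \<le> ereal x + d" using \<open>ereal z \<le> d\<close> by (rule add_left_mono)
  moreover have "ereal t \<le> ereal x + ereal z" using \<open>t \<le> x + z\<close> by simp
  ultimately show ?thesis by (rule order_trans[rotated])
qed

lemma aprod2: "1 \<le> i \<Longrightarrow> aprod a (i - 1) i = a (i - 1) * a i"
proof -
  assume "1 \<le> i"
  then obtain p where p: "i = Suc p" by (cases i) auto
  have "{p..Suc p} = {Suc p, p}" by auto
  then show ?thesis unfolding aprod_def p by simp
qed

lemma aprod_step: "aprod a 1 (Suc (Suc n)) = aprod a 1 n * a (Suc n) * a (Suc (Suc n))"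
proof -
  have "{1..Suc (Suc n)} = insert (Suc (Suc n)) (insert (Suc n) {1..n})" by auto
  then show ?thesis unfolding aprod_def by (simp add: mult.commute mult.left_commute)
qed

theorem proposition2p7:
  fixes ord :: "'a::field \<Rightarrow> int"
    and scale :: "'a \<Rightarrow> 'v::ab_group_add \<Rightarrow> 'v"
    and B :: "'v \<Rightarrow> 'v \<Rightarrow> 'a"
    and M :: "'v set" and xs :: "'v list"
    and a :: "nat \<Rightarrow> 'a" and m :: nat and \<Delta> :: 'a
  assumes F: "dyadic_local_field ord"
    and Delta: "\<exists>\<rho>\<in>val_units ord. \<Delta> = 1 - 4 * \<rho>" "dfrak ord \<Delta> = principal ord 4"
    and V: "vector_space scale" "sym_bilinear scale B"
      "nondegenerate_on B (module.span scale M)"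
    and lat: "is_lattice ord scale M"
    and integral: "\<forall>v\<in>M. B v v \<in> val_ring ord"
    and bong: "is_BONG ord scale B xs M" "good_BONG ord B xs" "length xs = m"
    and a_def: "\<forall>i. 1 \<le> i \<and> i \<le> m \<longrightarrow> a i = B (xs ! (i - 1)) (xs ! (i - 1))"
  shows
    "(\<forall>i j. odd i \<and> odd j \<and> 1 \<le> i \<and> i \<le> j \<and> j \<le> m \<longrightarrow> ord (a i) \<le> ord (a j) \<and> 0 \<le> ord (a i))
   \<and> (\<forall>i j. even i \<and> even j \<and> 1 \<le> i \<and> i \<le> j \<and> j \<le> m \<longrightarrow>
          ord (a i) \<le> ord (a j) \<and> - 2 * ord 2 \<le> ord (a i))
   \<and> (\<forall>j. odd j \<and> 1 \<le> j \<and> j \<le> m \<and> ord (a j) = 0 \<longrightarrow>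
          (\<forall>i. odd i \<and> 1 \<le> i \<and> i \<le> j \<longrightarrow> ord (a i) = 0) \<and>
          (\<forall>i. 1 \<le> i \<and> i \<le> j \<longrightarrow> even (ord (a i))))
   \<and> (\<forall>j. even j \<and> 1 \<le> j \<and> j \<le> m \<and> ord (a j) = - 2 * ord 2 \<longrightarrow>
          (\<forall>i. even i \<and> 1 \<le> i \<and> i \<le> j \<longrightarrow>
              ord (a (i - 1)) = 0 \<and> ord (a i) = - 2 * ord 2 \<and>
              dbr ord a m (- 1) (i - 1) i \<le> dd ord (- (a (i - 1) * a i)) \<and>
              ereal (of_int (2 * ord 2)) \<le> dbr ord a m (- 1) (i - 1) i) \<and>
          ereal (of_int (2 * ord 2)) \<le> dbr ord a m ((- 1) ^ (j div 2)) 1 j)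
   \<and> (\<forall>j. even j \<and> 1 \<le> j \<and> j \<le> m \<and> ord (a j) = - 2 * ord 2 \<longrightarrow>
          gram_iso j (diagm (\<lambda>k. a (k + 1))) (hyp_gram (j div 2)) \<or>
          gram_iso j (diagm (\<lambda>k. a (k + 1)))
             (osum (j - 2) (hyp_gram ((j - 2) div 2)) (diagm (\<lambda>k. if k = 0 then 1 else - \<Delta>))))
   \<and> (\<forall>j. even j \<and> 1 \<le> j \<and> j + 1 \<le> m \<and> ord (a j) = - 2 * ord 2 \<and> even (ord (a (j + 1))) \<longrightarrow>
          (\<exists>\<epsilon>\<in>val_units ord.
              (\<exists>t. t \<noteq> 0 \<and> (\<epsilon> = a (j + 1) * t\<^sup>2 \<or> \<epsilon> = \<Delta> * a (j + 1) * t\<^sup>2)) \<and>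
              gram_iso (j + 1) (diagm (\<lambda>k. a (k + 1)))
                 (osum j (hyp_gram (j div 2)) (diagm (\<lambda>k. \<epsilon>)))))"
proof -
  obtain \<rho> where rho: "\<rho> \<in> val_units ord" "\<Delta> = 1 - 4 * \<rho>" using Delta(1) by blast
  interpret dlfD ord \<rho> \<Delta>
  proof (unfold_locales)
    show "dyadic_local_field ord" by (rule F)
    show "\<rho> \<noteq> 0" "ord \<rho> = 0" using rho(1) unfolding val_units_def by auto
    show "\<Delta> = 1 - 4 * \<rho>" by (rule rho(2))
    show "dfrak ord \<Delta> = principal ord 4" by (rule Delta(2))
  qed
  have Q: "qspace scale B" using V(1,2) by (simp add: qspace_def)
  have ac: "addclosed M" using lat Ospan_addclosed unfolding is_lattice_def by blast
  note SF = seq_facts[OF Q bong(1) ac bong(3) a_def]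
  have FF: "1 \<le> m \<Longrightarrow> a 1 \<noteq> 0 \<and> 0 \<le> ord (a 1)" using first_fact[OF bong(1) bong(3) _ a_def integral] by blast
  have nz: "a i \<noteq> 0" if "1 \<le> i" "i \<le> m" for i
  proof (cases "i + 1 \<le> m")
    case True then show ?thesis using SF that by blast
  next
    case False
    then have "i = m" using that by simp
    show ?thesis
    proof (cases "i = 1")
      case True then show ?thesis using FF that by blast
    next
      case False
      then have "1 \<le> i - 1 \<and> (i - 1) + 1 \<le> m" using that by simp
      then have "a (i - 1 + 1) \<noteq> 0" using SF by blast
      then show ?thesis using that by simp
    qed
  qed
  have step: "ord (a i) - 2 * ord 2 \<le> ord (a (i + 1))" if "1 \<le> i" "i + 1 \<le> m" for i
  proof -
    have "a i \<noteq> 0" "a (i + 1) \<noteq> 0" "vge ord (a (i + 1) / a i) (- 2 * ord 2)" using SF that by blast+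
    then show ?thesis by (simp add: vge_def ord_divide)
  qed
  have ordc: "ord (- (a i * a (i + 1))) = ord (a i) + ord (a (i + 1))" if "1 \<le> i" "i + 1 \<le> m" for i
    using nz[of i] nz[of "i + 1"] that by (simp add: ord_mult)
  have cnz: "- (a i * a (i + 1)) \<noteq> 0" if "1 \<le> i" "i + 1 \<le> m" for i
    using nz[of i] nz[of "i + 1"] that by simp
  have ddge: "ereal (of_int (ord (a i) - ord (a (i + 1)))) \<le> dd ord (- (a i * a (i + 1))) \<and>
      0 \<le> dd ord (- (a i * a (i + 1)))" if ii: "1 \<le> i" "i + 1 \<le> m" for i
  proof -
    obtain \<beta> where "vge ord ((- (a i * a (i + 1)) - \<beta>\<^sup>2) / (- (a i * a (i + 1)))) (ord (a i) - ord (a (i + 1)))"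
      using SF ii by blast
    then show ?thesis using dd_lower cnz[OF ii] dd_nonneg by blast
  qed
  have par: "even (ord (a i) + ord (a (i + 1)))" if ii: "1 \<le> i" "i + 1 \<le> m" "ord (a (i + 1)) < ord (a i)" for i
  proof -
    obtain \<beta> where "vge ord ((- (a i * a (i + 1)) - \<beta>\<^sup>2) / (- (a i * a (i + 1)))) (ord (a i) - ord (a (i + 1)))"
      using SF ii by blast
    then have "even (ord (- (a i * a (i + 1))))" using parity_from cnz[OF ii(1,2)] ii(3) by fastforce
    then show ?thesis using ordc[OF ii(1,2)] by simp
  qed
  have gpair: "goodc (- (a i * a (i + 1)))" if ii: "1 \<le> i" "i + 1 \<le> m" "ord (a i) - ord (a (i + 1)) = 2 * ord 2" for i
  proof -
    obtain \<beta> where "vge ord ((- (a i * a (i + 1)) - \<beta>\<^sup>2) / (- (a i * a (i + 1)))) (ord (a i) - ord (a (i + 1)))"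
      using SF ii by blast
    then show ?thesis unfolding goodc_def using cnz[OF ii(1,2)] ii(3) by auto
  qed
  have gd: "ord (a i) \<le> ord (a (i + 2))" if "1 \<le> i" "i + 2 \<le> m" for i
  proof -
    have "(i - 1) + 2 < length xs" using that bong(3) by simp
    then have "ord (B (xs ! (i - 1)) (xs ! (i - 1))) \<le> ord (B (xs ! (i - 1 + 2)) (xs ! (i - 1 + 2)))"
      using bong(2) unfolding good_BONG_def by blast
    moreover have "a i = B (xs ! (i - 1)) (xs ! (i - 1))" "a (i + 2) = B (xs ! (i - 1 + 2)) (xs ! (i - 1 + 2))"
      using a_def that by (auto simp: Suc_diff_le)
    ultimately show ?thesis by simp
  qed
  have mono: "ord (a i) \<le> ord (a (i + 2 * d))" if "1 \<le> i" "i + 2 * d \<le> m" for i d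
    using that
  proof (induction d)
    case 0 then show ?case by simp
  next
    case (Suc d)
    then have "ord (a i) \<le> ord (a (i + 2 * d))" by simp
    also have "\<dots> \<le> ord (a (i + 2 * d + 2))" using gd[of "i + 2 * d"] Suc.prems by simp
    finally show ?case by (simp add: add.assoc)
  qed
  have mono2: "ord (a i) \<le> ord (a j)" if hh: "1 \<le> i" "i \<le> j" "j \<le> m" "even (j - i)" for i j
  proof -
    from hh(4) obtain d where "j - i = 2 * d" by (rule evenE)
    then have "j = i + 2 * d" using hh(2) by simp
    then show ?thesis using mono[of i d] hh by simp
  qed
  have C1: "\<forall>i j. odd i \<and> odd j \<and> 1 \<le> i \<and> i \<le> j \<and> j \<le> m \<longrightarrow> ord (a i) \<le> ord (a j) \<and> 0 \<le> ord (a i)"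
  proof (intro allI impI)
    fix i j assume h: "odd i \<and> odd j \<and> 1 \<le> i \<and> i \<le> j \<and> j \<le> m"
    have "ord (a i) \<le> ord (a j)" using mono2[of i j] h by simp
    moreover have "ord (a 1) \<le> ord (a i)" using mono2[of 1 i] h by simp
    moreover have "0 \<le> ord (a 1)" using FF h by simp
    ultimately show "ord (a i) \<le> ord (a j) \<and> 0 \<le> ord (a i)" by simp
  qed
  have C2: "\<forall>i j. even i \<and> even j \<and> 1 \<le> i \<and> i \<le> j \<and> j \<le> m \<longrightarrow>
          ord (a i) \<le> ord (a j) \<and> - 2 * ord 2 \<le> ord (a i)"
  proof (intro allI impI)
    fix i j assume h: "even i \<and> even j \<and> 1 \<le> i \<and> i \<le> j \<and> j \<le> m"
    then have i2: "2 \<le> i" by presburger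
    have "ord (a i) \<le> ord (a j)" using mono2[of i j] h by simp
    moreover have "ord (a 2) \<le> ord (a i)" using mono2[of 2 i] h i2 by simp
    moreover have "ord (a 1) - 2 * ord 2 \<le> ord (a 2)" using step[of 1] h i2 by (simp add: numeral_2_eq_2)
    moreover have "0 \<le> ord (a 1)" using FF h by simp
    ultimately show "ord (a i) \<le> ord (a j) \<and> - 2 * ord 2 \<le> ord (a i)" by simp
  qed
  have C3: "\<forall>j. odd j \<and> 1 \<le> j \<and> j \<le> m \<and> ord (a j) = 0 \<longrightarrow>
          (\<forall>i. odd i \<and> 1 \<le> i \<and> i \<le> j \<longrightarrow> ord (a i) = 0) \<and>
          (\<forall>i. 1 \<le> i \<and> i \<le> j \<longrightarrow> even (ord (a i)))"
  proof (intro allI impI)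
    fix j assume h: "odd j \<and> 1 \<le> j \<and> j \<le> m \<and> ord (a j) = 0"
    have O: "ord (a i) = 0" if "odd i" "1 \<le> i" "i \<le> j" for i
      using C1 h that by force
    have "even (ord (a i))" if "1 \<le> i" "i \<le> j" for i
    proof (cases "odd i")
      case True then show ?thesis using O that by simp
    next
      case False
      then have i2: "2 \<le> i" "i + 1 \<le> j" using that h by presburger+
      have o1: "ord (a (i - 1)) = 0" using O[of "i - 1"] False i2 by simp
      have o2: "ord (a (i + 1)) = 0" using O[of "i + 1"] False i2 by simp
      show ?thesis
      proof (cases "ord (a i) < 0")
        case True
        then have "even (ord (a (i - 1)) + ord (a (i - 1 + 1)))" using par[of "i - 1"] i2 h o1 by simp
        then show ?thesis using o1 i2 by simp
      next
        case False
        show ?thesis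
        proof (cases "ord (a i) = 0")
          case True then show ?thesis by simp
        next
          case False2: False
          then have "ord (a (i + 1)) < ord (a i)" using False o2 by simp
          then have "even (ord (a i) + ord (a (i + 1)))" using par[of i] i2 h by simp
          then show ?thesis using o2 by simp
        qed
      qed
    qed
    then show "(\<forall>i. odd i \<and> 1 \<le> i \<and> i \<le> j \<longrightarrow> ord (a i) = 0) \<and> (\<forall>i. 1 \<le> i \<and> i \<le> j \<longrightarrow> even (ord (a i)))"
      using O by blast
  qed
  have J: "(\<forall>i. even i \<and> 2 \<le> i \<and> i \<le> j \<longrightarrow> ord (a i) = - 2 * ord 2) \<and>
           (\<forall>i. odd i \<and> 1 \<le> i \<and> i < j \<longrightarrow> ord (a i) = 0)"
    if h: "even j" "1 \<le> j" "j \<le> m" "ord (a j) = - 2 * ord 2" for j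
  proof -
    have E: "ord (a i) = - 2 * ord 2" if "even i" "2 \<le> i" "i \<le> j" for i
      using C2 h that by force
    have "ord (a i) = 0" if "odd i" "1 \<le> i" "i < j" for i
    proof -
      have i1: "i + 1 \<le> j" "even (i + 1)" using that h by presburger+
      then have "ord (a (i + 1)) = - 2 * ord 2" using E[of "i + 1"] that by simp
      moreover have "ord (a i) - 2 * ord 2 \<le> ord (a (i + 1))" using step[of i] that i1 h by simp
      moreover have "0 \<le> ord (a i)" using C1 that h by force
      ultimately show ?thesis by simp
    qed
    then show ?thesis using E by blast
  qed
  have ALPHA: "ereal (of_int (2 * ord 2)) \<le> alpha ord a m k"
    if h: "even j" "1 \<le> j" "j \<le> m" "ord (a j) = - 2 * ord 2" and k: "even k" "2 \<le> k" "k \<le> j" "k < m" for j k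
  proof -
    note JJ = J[OF h]
    have Rk: "ord (a k) = - 2 * ord 2" using JJ k by blast
    have oddpos: "0 \<le> ord (a i)" if "odd i" "1 \<le> i" "i \<le> m" for i using C1 that by force
    show ?thesis unfolding alpha_def
    proof (rule Inf_greatest)
      fix z assume "z \<in> {ereal (of_int (ord (a (k + 1)) - ord (a k)) / 2 + of_int (ord 2))} \<union>
        {ereal (of_int (ord (a (k + 1)) - ord (a j'))) + dd ord (- (a j' * a (j' + 1))) |j'. 1 \<le> j' \<and> j' \<le> k} \<union>
        {ereal (of_int (ord (a (j' + 1)) - ord (a k))) + dd ord (- (a j' * a (j' + 1))) |j'. k \<le> j' \<and> j' + 1 \<le> m}"
      then consider (A) "z = ereal (of_int (ord (a (k + 1)) - ord (a k)) / 2 + of_int (ord 2))"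
        | (Bc) j' where "z = ereal (of_int (ord (a (k + 1)) - ord (a j'))) + dd ord (- (a j' * a (j' + 1)))" "1 \<le> j'" "j' \<le> k"
        | (Cc) j' where "z = ereal (of_int (ord (a (j' + 1)) - ord (a k))) + dd ord (- (a j' * a (j' + 1)))" "k \<le> j'" "j' + 1 \<le> m"
        by blast
      then show "ereal (of_int (2 * ord 2)) \<le> z"
      proof cases
        case A
        have "0 \<le> ord (a (k + 1))" using oddpos[of "k + 1"] k by simp
        then show ?thesis using A Rk by simp
      next
        case (Bc j')
        have p1: "0 \<le> ord (a (k + 1))" using oddpos[of "k + 1"] k by simp
        have dg: "ereal (of_int (ord (a j') - ord (a (j' + 1)))) \<le> dd ord (- (a j' * a (j' + 1))) \<and>
             0 \<le> dd ord (- (a j' * a (j' + 1)))" using ddge[of j'] Bc k by simp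
        show ?thesis
        proof (cases "odd j'")
          case True
          have jl: "j' < k" using True Bc(3) k(1) by (cases "j' = k") auto
          have "ord (a j') = 0" using JJ[THEN conjunct2, rule_format, of j'] True Bc(2) jl k(3) by simp
          moreover have "ord (a (j' + 1)) = - 2 * ord 2"
            using JJ[THEN conjunct1, rule_format, of "j' + 1"] True jl k(3) Bc(2) by simp
          ultimately show ?thesis using Bc(1) p1 dg ereal_add_ge[of "of_int (ord (a j') - ord (a (j' + 1)))"] by simp
        next
          case False
          have "2 \<le> j'" using False Bc(2) by presburger
          then have "ord (a j') = - 2 * ord 2" using JJ[THEN conjunct1, rule_format, of j'] False Bc(3) k(3) by simp
          then show ?thesis using Bc(1) p1 dg ereal_add_ge[of 0] by (simp add: zero_ereal_def)
        qed
      next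
        case (Cc j')
        have dg: "ereal (of_int (ord (a j') - ord (a (j' + 1)))) \<le> dd ord (- (a j' * a (j' + 1))) \<and>
             0 \<le> dd ord (- (a j' * a (j' + 1)))" using ddge[of j'] Cc k by simp
        show ?thesis
        proof (cases "odd j'")
          case True
          have "0 \<le> ord (a j')" using oddpos[of j'] True Cc k by simp
          then show ?thesis using Cc(1) Rk dg ereal_add_ge[of "of_int (ord (a j') - ord (a (j' + 1)))"] by simp
        next
          case False
          have "0 \<le> ord (a (j' + 1))" using oddpos[of "j' + 1"] False Cc k by simp
          then show ?thesis using Cc(1) Rk dg ereal_add_ge[of 0] by (simp add: zero_ereal_def)
        qed
      qed
    qed
  qed
  have C4: "\<forall>j. even j \<and> 1 \<le> j \<and> j \<le> m \<and> ord (a j) = - 2 * ord 2 \<longrightarrow>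
          (\<forall>i. even i \<and> 1 \<le> i \<and> i \<le> j \<longrightarrow>
              ord (a (i - 1)) = 0 \<and> ord (a i) = - 2 * ord 2 \<and>
              dbr ord a m (- 1) (i - 1) i \<le> dd ord (- (a (i - 1) * a i)) \<and>
              ereal (of_int (2 * ord 2)) \<le> dbr ord a m (- 1) (i - 1) i) \<and>
          ereal (of_int (2 * ord 2)) \<le> dbr ord a m ((- 1) ^ (j div 2)) 1 j"
  proof (intro allI impI)
    fix j assume h: "even j \<and> 1 \<le> j \<and> j \<le> m \<and> ord (a j) = - 2 * ord 2"
    have JJ: "(\<forall>i. even i \<and> 2 \<le> i \<and> i \<le> j \<longrightarrow> ord (a i) = - 2 * ord 2) \<and>
           (\<forall>i. odd i \<and> 1 \<le> i \<and> i < j \<longrightarrow> ord (a i) = 0)" using J h by blast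
    have j2: "2 \<le> j" using h by presburger
    have AL: "ereal (of_int (2 * ord 2)) \<le> alpha ord a m k" if "even k" "2 \<le> k" "k \<le> j" "k < m" for k
      using ALPHA[of j k] h that by blast
    have A1: "\<forall>i. even i \<and> 1 \<le> i \<and> i \<le> j \<longrightarrow>
              ord (a (i - 1)) = 0 \<and> ord (a i) = - 2 * ord 2 \<and>
              dbr ord a m (- 1) (i - 1) i \<le> dd ord (- (a (i - 1) * a i)) \<and>
              ereal (of_int (2 * ord 2)) \<le> dbr ord a m (- 1) (i - 1) i"
    proof (intro allI impI)
      fix i assume i: "even i \<and> 1 \<le> i \<and> i \<le> j"
      have i2: "2 \<le> i" using i by presburger
      have "odd (i - 1)" "1 \<le> i - 1" "i - 1 < j" using i i2 by presburger+
      then have r1: "ord (a (i - 1)) = 0" using JJ[THEN conjunct2, rule_format, of "i - 1"] by blast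
      have r2: "ord (a i) = - 2 * ord 2" using JJ[THEN conjunct1, rule_format, of i] i i2 by simp
      have ap: "aprod a (i - 1) i = a (i - 1) * a i" by (rule aprod2) (use i in simp)
      have deq: "dbr ord a m (- 1) (i - 1) i = min (dd ord (- (a (i - 1) * a i)))
         (min (if 2 \<le> i - 1 then alpha ord a m (i - 2) else \<infinity>) (if i < m then alpha ord a m i else \<infinity>))"
        unfolding dbr_def ap by (simp add: diff_diff_add numeral_2_eq_2)
      have ii: "i - 1 + 1 = i" using i2 by simp
      have "ereal (of_int (ord (a (i - 1)) - ord (a (i - 1 + 1)))) \<le> dd ord (- (a (i - 1) * a (i - 1 + 1)))"
        using ddge[of "i - 1"] i2 i h by simp
      then have d1: "ereal (of_int (2 * ord 2)) \<le> dd ord (- (a (i - 1) * a i))" unfolding ii using r1 r2 by simp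
      have d2: "ereal (of_int (2 * ord 2)) \<le> (if 2 \<le> i - 1 then alpha ord a m (i - 2) else \<infinity>)"
      proof (cases "2 \<le> i - 1")
        case True
        then have "even (i - 2)" "2 \<le> i - 2" "i - 2 \<le> j" "i - 2 < m" using i h by presburger+
        then show ?thesis using AL True by simp
      qed simp
      have d3: "ereal (of_int (2 * ord 2)) \<le> (if i < m then alpha ord a m i else \<infinity>)"
        using AL[of i] i i2 by simp
      show "ord (a (i - 1)) = 0 \<and> ord (a i) = - 2 * ord 2 \<and>
              dbr ord a m (- 1) (i - 1) i \<le> dd ord (- (a (i - 1) * a i)) \<and>
              ereal (of_int (2 * ord 2)) \<le> dbr ord a m (- 1) (i - 1) i"
        using r1 r2 d1 d2 d3 unfolding deq by simp
    qed
    have G: "goodc ((- 1) ^ t * aprod a 1 (2 * t))" if "1 \<le> t" "2 * t \<le> j" for t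
      using that
    proof (induction t)
      case 0 then show ?case by simp
    next
      case (Suc t)
      show ?case
      proof (cases "t = 0")
        case True
        have "ord (a 1) = 0" using JJ[THEN conjunct2, rule_format, of 1] j2 by simp
        moreover have "ord (a 2) = - 2 * ord 2" using JJ[THEN conjunct1, rule_format, of 2] j2 by simp
        ultimately have "goodc (- (a 1 * a (1 + 1)))" using gpair[of 1] j2 h by (simp add: numeral_2_eq_2)
        moreover have "aprod a 1 2 = a 1 * a 2" using aprod2[of 2 a] by simp
        ultimately show ?thesis using True by (simp add: numeral_2_eq_2)
      next
        case False
        then have IH: "goodc ((- 1) ^ t * aprod a 1 (2 * t))" using Suc by simp
        have o1: "ord (a (2 * t + 1)) = 0" using JJ[THEN conjunct2, rule_format, of "2 * t + 1"] Suc.prems by simp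
        have o2: "ord (a (2 * t + 1 + 1)) = - 2 * ord 2" using JJ[THEN conjunct1, rule_format, of "2 * t + 2"] Suc.prems False
          by (simp add: add.assoc)
        have gp: "goodc (- (a (2 * t + 1) * a (2 * t + 1 + 1)))" using gpair[of "2 * t + 1"] o1 o2 Suc.prems h by simp
        have "(- 1) ^ Suc t * aprod a 1 (2 * Suc t) = ((- 1) ^ t * aprod a 1 (2 * t)) * (- (a (2 * t + 1) * a (2 * t + 1 + 1)))"
          using aprod_step[of a "2 * t"] by simp
        then show ?thesis using goodc_mult[OF IH gp] by (simp add: mult.assoc)
      qed
    qed
    obtain K where K: "j = 2 * K" using h by (auto elim: evenE)
    then have "goodc ((- 1) ^ K * aprod a 1 j)" using G[of K] h by simp
    then obtain \<beta> where gb: "(- 1) ^ K * aprod a 1 j \<noteq> 0"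
      "vge ord (((- 1) ^ K * aprod a 1 j - \<beta>\<^sup>2) / ((- 1) ^ K * aprod a 1 j)) (2 * ord 2)"
      unfolding goodc_def by blast
    have jd: "j div 2 = K" using K by simp
    have dj: "ereal (of_int (2 * ord 2)) \<le> dd ord ((- 1) ^ (j div 2) * aprod a 1 j)"
      unfolding jd by (rule dd_lower[OF gb])
    have "ereal (of_int (2 * ord 2)) \<le> (if j < m then alpha ord a m j else \<infinity>)"
      using AL[of j] h j2 by simp
    then have A2: "ereal (of_int (2 * ord 2)) \<le> dbr ord a m ((- 1) ^ (j div 2)) 1 j"
      unfolding dbr_def using dj by simp
    show "(\<forall>i. even i \<and> 1 \<le> i \<and> i \<le> j \<longrightarrow>
              ord (a (i - 1)) = 0 \<and> ord (a i) = - 2 * ord 2 \<and>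
              dbr ord a m (- 1) (i - 1) i \<le> dd ord (- (a (i - 1) * a i)) \<and>
              ereal (of_int (2 * ord 2)) \<le> dbr ord a m (- 1) (i - 1) i) \<and>
          ereal (of_int (2 * ord 2)) \<le> dbr ord a m ((- 1) ^ (j div 2)) 1 j" using A1 A2 by (rule conjI)
  qed
  have C5: "\<forall>j. even j \<and> 1 \<le> j \<and> j \<le> m \<and> ord (a j) = - 2 * ord 2 \<longrightarrow>
          gram_iso j (diagm (\<lambda>k. a (k + 1))) (hyp_gram (j div 2)) \<or>
          gram_iso j (diagm (\<lambda>k. a (k + 1)))
             (osum (j - 2) (hyp_gram ((j - 2) div 2)) (diagm (\<lambda>k. if k = 0 then 1 else - \<Delta>)))"
  proof (intro allI impI)
    fix j assume h: "even j \<and> 1 \<le> j \<and> j \<le> m \<and> ord (a j) = - 2 * ord 2"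
    have JJ: "(\<forall>i. even i \<and> 2 \<le> i \<and> i \<le> j \<longrightarrow> ord (a i) = - 2 * ord 2) \<and>
           (\<forall>i. odd i \<and> 1 \<le> i \<and> i < j \<longrightarrow> ord (a i) = 0)" using J h by blast
    obtain K where K: "j = 2 * K" using h by (auto elim: evenE)
    then obtain k' where jk: "j = 2 * Suc k'" using h by (cases K) auto
    have P: "\<forall>t. 1 \<le> t \<and> t \<le> Suc k' \<longrightarrow> gram_iso 2 (d2 (a (2*t-1)) (a (2*t))) H1 \<or> gram_iso 2 (d2 (a (2*t-1)) (a (2*t))) Dm"
    proof (intro allI impI)
      fix t assume t: "1 \<le> t \<and> t \<le> Suc k'"
      have tt: "2 * t - 1 + 1 = 2 * t" using t by simp
      have "odd (2 * t - 1)" "1 \<le> 2 * t - 1" "2 * t - 1 < j" "even (2 * t)" "2 \<le> 2 * t" "2 * t \<le> j"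
        using t jk by presburger+
      then have o1: "ord (a (2 * t - 1)) = 0" and o2: "ord (a (2 * t)) = - 2 * ord 2"
        using JJ[THEN conjunct2, rule_format, of "2 * t - 1"] JJ[THEN conjunct1, rule_format, of "2 * t"] by blast+
      have "a (2 * t - 1) \<noteq> 0 \<and> a (2 * t - 1 + 1) \<noteq> 0 \<and>
          (\<exists>\<beta>. vge ord ((- (a (2 * t - 1) * a (2 * t - 1 + 1)) - \<beta>\<^sup>2) / (- (a (2 * t - 1) * a (2 * t - 1 + 1))))
              (ord (a (2 * t - 1)) - ord (a (2 * t - 1 + 1))))"
      proof -
        have pre: "1 \<le> 2 * t - 1 \<and> 2 * t - 1 + 1 \<le> m" using t jk h by presburger
        show ?thesis using SF[rule_format, OF pre] by blast
      qed
      then obtain \<beta> where u: "a (2 * t - 1) \<noteq> 0" "a (2 * t) \<noteq> 0" and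
          b: "vge ord ((- (a (2 * t - 1) * a (2 * t)) - \<beta>\<^sup>2) / (- (a (2 * t - 1) * a (2 * t)))) (2 * ord 2)"
        unfolding tt using o1 o2 by auto
      have "- (a (2 * t - 1) * a (2 * t)) \<noteq> 0" using u by simp
      from sqclass_from[OF this b] obtain s where s: "s \<noteq> 0"
        "- (a (2 * t - 1) * a (2 * t)) = s\<^sup>2 \<or> - (a (2 * t - 1) * a (2 * t)) = \<Delta> * s\<^sup>2" by blast
      then show "gram_iso 2 (d2 (a (2*t-1)) (a (2*t))) H1 \<or> gram_iso 2 (d2 (a (2*t-1)) (a (2*t))) Dm"
        using pair_H[OF u(1) s(1)] pair_D[OF u(1) o1 s(1)] by blast
    qed
    have "j div 2 = Suc k'" "j - 2 = 2 * k'" "(j - 2) div 2 = k'" using jk by simp_all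
    then show "gram_iso j (diagm (\<lambda>k. a (k + 1))) (hyp_gram (j div 2)) \<or>
          gram_iso j (diagm (\<lambda>k. a (k + 1)))
             (osum (j - 2) (hyp_gram ((j - 2) div 2)) (diagm (\<lambda>k. if k = 0 then 1 else - \<Delta>)))"
      using iv_asm[OF P] jk by simp
  qed
  have C6: "\<forall>j. even j \<and> 1 \<le> j \<and> j + 1 \<le> m \<and> ord (a j) = - 2 * ord 2 \<and> even (ord (a (j + 1))) \<longrightarrow>
          (\<exists>\<epsilon>\<in>val_units ord.
              (\<exists>t. t \<noteq> 0 \<and> (\<epsilon> = a (j + 1) * t\<^sup>2 \<or> \<epsilon> = \<Delta> * a (j + 1) * t\<^sup>2)) \<and>
              gram_iso (j + 1) (diagm (\<lambda>k. a (k + 1)))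
                 (osum j (hyp_gram (j div 2)) (diagm (\<lambda>k. \<epsilon>))))"
  proof (intro allI impI)
    fix j assume h: "even j \<and> 1 \<le> j \<and> j + 1 \<le> m \<and> ord (a j) = - 2 * ord 2 \<and> even (ord (a (j + 1)))"
    have X: "gram_iso j (diagm (\<lambda>k. a (k + 1))) (hyp_gram (j div 2)) \<or>
          gram_iso j (diagm (\<lambda>k. a (k + 1)))
             (osum (j - 2) (hyp_gram ((j - 2) div 2)) (diagm (\<lambda>k. if k = 0 then 1 else - \<Delta>)))"
      using C5 h by simp
    obtain K where K: "j = 2 * K" using h by (auto elim: evenE)
    then obtain k' where jk: "j = 2 * Suc k'" using h by (cases K) auto
    have X': "gram_iso (2 * Suc k') (diagm (\<lambda>i. a (i + 1))) (hyp_gram (Suc k')) \<or>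
         gram_iso (2 * Suc k') (diagm (\<lambda>i. a (i + 1))) (osum (2 * k') (hyp_gram k') Dm)"
      using X jk by simp
    obtain t where t: "t \<noteq> 0" "ord t = - (ord (a (j + 1)) div 2)" using exists_ord by blast
    have an: "a (j + 1) \<noteq> 0" using nz[of "j + 1"] h by simp
    have "ord (a (j + 1) * t\<^sup>2) = ord (a (j + 1)) + 2 * ord t" using an t by (simp add: ord_mult ord_sq)
    also have "\<dots> = 0" using t h by simp
    finally have c: "a (2 * Suc k' + 1) * t\<^sup>2 \<noteq> 0" "ord (a (2 * Suc k' + 1) * t\<^sup>2) = 0" using an t jk by simp_all
    from v_asm[OF X' t(1) c] obtain \<epsilon> where e: "\<epsilon> \<noteq> 0" "ord \<epsilon> = 0"
      "\<exists>t. t \<noteq> 0 \<and> (\<epsilon> = a (2 * Suc k' + 1) * t\<^sup>2 \<or> \<epsilon> = \<Delta> * a (2 * Suc k' + 1) * t\<^sup>2)"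
      "gram_iso (2 * Suc k' + 1) (diagm (\<lambda>i. a (i + 1))) (osum (2 * Suc k') (hyp_gram (Suc k')) (diagm (\<lambda>i. \<epsilon>)))"
      by blast
    have "\<epsilon> \<in> val_units ord" using e unfolding val_units_def by simp
    moreover have "j div 2 = Suc k'" using jk by simp
    ultimately show "\<exists>\<epsilon>\<in>val_units ord.
              (\<exists>t. t \<noteq> 0 \<and> (\<epsilon> = a (j + 1) * t\<^sup>2 \<or> \<epsilon> = \<Delta> * a (j + 1) * t\<^sup>2)) \<and>
              gram_iso (j + 1) (diagm (\<lambda>k. a (k + 1)))
                 (osum j (hyp_gram (j div 2)) (diagm (\<lambda>k. \<epsilon>)))"
      using e jk by auto
  qed
  show ?thesis using C1 C2 C3 C4 C5 C6 by blast
qed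



end
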